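(* For any $k\in\mathbb T^2$ (and $\epsilon,\mathrm U\ge0$), $$\min\sigma(A_{1,1}(\mathrm U,k))=\min\sigma(B_{1,1}(k))=\min\sigma(M_{\mathfrak f(k)})=4\epsilon-2\epsilon\cos(k/2)=:\mathfrak z(k).$$
   Context: Notation: $\mathbb T^2=[-\pi,\pi)^2$ with normalized Haar measure $\nu$; $L^2(\mathbb T^2)=L^2(\mathbb T^2,\nu)$. $\hat{\mathfrak e}_x(p)=e^{ip\cdot x}$ ($x\in\mathbb Z^2$); $P_x$ the orthogonal projection onto $\mathbb C\hat{\mathfrak e}_x$; $M_g$ multiplication by $g$; $\cos(q):=\cos q_1+\cos q_2$ for $q\in\mathbb R^2$. Data: $\epsilon,\mathrm U\ge0$; $\mathrm u:\mathbb Z^2\to[0,\infty)$ absolutely summable and invariant under $90^\circ$-rotations. For $k,p\in\mathbb T^2$: $\mathfrak f(k)(p)=\epsilon(4-\cos(p+k)-\cos p)$, $B_{1,1}(k)=M_{\mathfrak f(k)}+\sum_x\mathrm u(x)P_x$, $A_{1,1}(\mathrm U,k)=B_{1,1}(k)+\mathrm UP_0$. *)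

theory Defs
  imports "HOL-Analysis.Analysis"
begin

definition torus :: "(real \<times> real) set" where
  "torus = {-pi..<pi} \<times> {-pi..<pi}"

definition nu :: "(real \<times> real) measure" where
  "nu = density lborel (\<lambda>p. ennreal (indicator torus p / (4 * pi ^ 2)))"

definition cosT :: "real \<times> real \<Rightarrow> real" where
  "cosT q = cos (fst q) + cos (snd q)"

definition dotZ :: "real \<times> real \<Rightarrow> int \<times> int \<Rightarrow> real" where
  "dotZ p x = fst p * real_of_int (fst x) + snd p * real_of_int (snd x)"

definition ee :: "int \<times> int \<Rightarrow> real \<times> real \<Rightarrow> complex" where
  "ee x p = exp (\<i> * complex_of_real (dotZ p x))"

definition L2 :: "(real \<times> real \<Rightarrow> complex) set" where
  "L2 = {g. g \<in> borel_measurable nu \<and> integrable nu (\<lambda>p. (cmod (g p))\<^sup>2)}"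

definition L2norm :: "(real \<times> real \<Rightarrow> complex) \<Rightarrow> real" where
  "L2norm g = sqrt (\<integral>p. (cmod (g p))\<^sup>2 \<partial>nu)"

definition coefE :: "int \<times> int \<Rightarrow> (real \<times> real \<Rightarrow> complex) \<Rightarrow> complex" where
  "coefE x g = (\<integral>p. cnj (ee x p) * g p \<partial>nu)"

definition Proj :: "int \<times> int \<Rightarrow> (real \<times> real \<Rightarrow> complex) \<Rightarrow> (real \<times> real \<Rightarrow> complex)" where
  "Proj x g = (\<lambda>p. coefE x g * ee x p)"

definition Mult :: "(real \<times> real \<Rightarrow> real) \<Rightarrow> (real \<times> real \<Rightarrow> complex) \<Rightarrow> (real \<times> real \<Rightarrow> complex)" where
  "Mult h g = (\<lambda>p. complex_of_real (h p) * g p)"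

definition ff :: "real \<Rightarrow> real \<times> real \<Rightarrow> real \<times> real \<Rightarrow> real" where
  "ff eps k p = eps * (4 - cosT (p + k) - cosT p)"

definition Bop :: "real \<Rightarrow> (int \<times> int \<Rightarrow> real) \<Rightarrow> real \<times> real \<Rightarrow>
    (real \<times> real \<Rightarrow> complex) \<Rightarrow> (real \<times> real \<Rightarrow> complex)" where
  "Bop eps u k g = (\<lambda>p. Mult (ff eps k) g p
      + (\<Sum>\<^sub>\<infinity>x. complex_of_real (u x) * Proj x g p))"

definition Aop :: "real \<Rightarrow> (int \<times> int \<Rightarrow> real) \<Rightarrow> real \<Rightarrow> real \<times> real \<Rightarrow>
    (real \<times> real \<Rightarrow> complex) \<Rightarrow> (real \<times> real \<Rightarrow> complex)" where
  "Aop eps u U k g = (\<lambda>p. Bop eps u k g p + complex_of_real U * Proj (0, 0) g p)"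

definition L2_resolvent :: "((real \<times> real \<Rightarrow> complex) \<Rightarrow> (real \<times> real \<Rightarrow> complex)) \<Rightarrow> complex \<Rightarrow> bool" where
  "L2_resolvent A z \<longleftrightarrow> (\<exists>R. (\<forall>g\<in>L2. R g \<in> L2)
      \<and> (\<exists>C. \<forall>g\<in>L2. L2norm (R g) \<le> C * L2norm g)
      \<and> (\<forall>g\<in>L2. AE p in nu. A (R g) p - z * R g p = g p)
      \<and> (\<forall>g\<in>L2. AE p in nu. R (\<lambda>q. A g q - z * g q) p = g p))"

definition L2_spectrum :: "((real \<times> real \<Rightarrow> complex) \<Rightarrow> (real \<times> real \<Rightarrow> complex)) \<Rightarrow> complex set" where
  "L2_spectrum A = {z. \<not> L2_resolvent A z}"

definition is_min_spectrum :: "complex set \<Rightarrow> real \<Rightarrow> bool" where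
  "is_min_spectrum S z \<longleftrightarrow> complex_of_real z \<in> S \<and> (\<forall>w\<in>S. w \<in> \<real> \<and> z \<le> Re w)"

definition zz :: "real \<Rightarrow> real \<times> real \<Rightarrow> real" where
  "zz eps k = 4 * eps - 2 * eps * cosT (fst k / 2, snd k / 2)"

end

theory Submission
  imports Defs "HOL-Analysis.Analysis"
begin

lemma torus_meas: "emeasure lborel torus = ennreal (4 * pi^2)"
proof -
  have "emeasure lborel torus = emeasure (lborel \<Otimes>\<^sub>M lborel) ({-pi..<pi} \<times> {-pi..<pi::real})"
    by (simp add: torus_def lborel_prod)
  also have "\<dots> = emeasure lborel {-pi..<pi::real} * emeasure lborel {-pi..<pi::real}"
    by (rule lborel.emeasure_pair_measure_Times) auto
  also have "\<dots> = ennreal (4*pi^2)"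
    by (simp add: ennreal_mult'[symmetric] power2_eq_square)
  finally show ?thesis .
qed

lemma torus_borel[measurable]: "torus \<in> sets borel"
  unfolding torus_def by (rule borel_Times) auto

lemma sets_nu[simp, measurable_cong]: "sets nu = sets borel"
  by (simp add: nu_def)

lemma space_nu[simp]: "space nu = UNIV"
  by (simp add: nu_def)

lemma nu_UNIV: "emeasure nu UNIV = 1"
proof -
  have "emeasure nu (space nu) = (\<integral>\<^sup>+ p. ennreal (1/(4*pi^2)) * indicator torus p \<partial>lborel)"
    unfolding nu_def
    by (subst emeasure_density) (auto intro!: nn_integral_cong simp: indicator_def)
  also have "\<dots> = ennreal (1/(4*pi^2)) * emeasure lborel torus"
    by (rule nn_integral_cmult_indicator) simp
  also have "\<dots> = 1" by (simp add: torus_meas ennreal_mult'[symmetric])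
  finally show ?thesis by simp
qed

lemma nu_finite: "finite_measure nu"
  by (rule finite_measureI) (simp add: nu_UNIV)

lemma measure_nu_UNIV: "measure nu UNIV = 1"
  by (simp add: measure_def nu_UNIV)

interpretation nuF: finite_measure nu by (rule nu_finite)



lemma measurable_nu_eq[simp]: "borel_measurable nu = borel_measurable borel"
  by (rule measurable_cong_sets) auto

lemma borel_measurable_cnj'[measurable (raw)]:
  "f \<in> borel_measurable M \<Longrightarrow> (\<lambda>x. cnj (f x)) \<in> borel_measurable M"
  by (rule measurable_compose[of f M borel cnj]) (auto intro!: borel_measurable_continuous_onI continuous_intros)

definition nrm2 :: "(real \<times> real \<Rightarrow> complex) \<Rightarrow> real" where
  "nrm2 g = (\<integral>p. (cmod (g p))\<^sup>2 \<partial>nu)"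

definition ip :: "(real \<times> real \<Rightarrow> complex) \<Rightarrow> (real \<times> real \<Rightarrow> complex) \<Rightarrow> complex" where
  "ip g h = (\<integral>p. g p * cnj (h p) \<partial>nu)"

lemma L2norm_nrm2: "L2norm g = sqrt (nrm2 g)"
  by (simp add: L2norm_def nrm2_def)

lemma nrm2_nonneg: "nrm2 g \<ge> 0"
  unfolding nrm2_def by (rule integral_nonneg_AE) auto

lemma L2I: "g \<in> borel_measurable borel \<Longrightarrow> integrable nu (\<lambda>p. (cmod (g p))\<^sup>2) \<Longrightarrow> g \<in> L2"
  by (simp add: L2_def)

lemma L2D: assumes "g \<in> L2" shows "g \<in> borel_measurable borel" "integrable nu (\<lambda>p. (cmod (g p))\<^sup>2)"
  using assms by (auto simp: L2_def)

lemma L2_integrable: assumes "g \<in> L2" shows "integrable nu g"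
proof (rule Bochner_Integration.integrable_bound[where f="\<lambda>p. 1 + (cmod (g p))\<^sup>2"])
  show "integrable nu (\<lambda>p. 1 + (cmod (g p))\<^sup>2)"
    using L2D[OF assms] by (intro Bochner_Integration.integrable_add) auto
  show "g \<in> borel_measurable nu" using L2D[OF assms] by simp
  show "AE x in nu. norm (g x) \<le> norm (1 + (cmod (g x))\<^sup>2)"
  proof (intro AE_I2)
    fix x
    have "0 \<le> (cmod (g x) - 1)\<^sup>2" by simp
    then have "2 * cmod (g x) \<le> 1 + (cmod (g x))\<^sup>2"
      by (simp add: power2_eq_square algebra_simps)
    moreover have "0 \<le> cmod (g x)" by simp
    ultimately have "cmod (g x) \<le> 1 + (cmod (g x))\<^sup>2" by linarith
    then show "norm (g x) \<le> norm (1 + (cmod (g x))\<^sup>2)" by simp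
  qed
qed

lemma L2_norm_integrable: assumes "g \<in> L2" shows "integrable nu (\<lambda>p. cmod (g p))"
  using L2_integrable[OF assms] by simp

lemma L2_bounded:
  assumes "g \<in> borel_measurable borel" and "\<And>p. cmod (g p) \<le> B"
  shows "g \<in> L2"
proof (rule L2I[OF assms(1)])
  show "integrable nu (\<lambda>p. (cmod (g p))\<^sup>2)"
  proof (rule Bochner_Integration.integrable_bound[where f="\<lambda>p. B\<^sup>2"])
    show "integrable nu (\<lambda>p. B\<^sup>2)" by simp
    show "(\<lambda>p. (cmod (g p))\<^sup>2) \<in> borel_measurable nu" using assms(1) by simp
    show "AE x in nu. norm ((cmod (g x))\<^sup>2) \<le> norm (B\<^sup>2)"
      using assms(2) by (auto intro!: AE_I2 power_mono simp: abs_le_square_iff)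
  qed
qed

lemma sq_add_le: "(cmod (a + b))\<^sup>2 \<le> 2 * (cmod a)\<^sup>2 + 2 * (cmod b)\<^sup>2"
proof -
  have "cmod (a + b) \<le> cmod a + cmod b" by (rule norm_triangle_ineq)
  then have "(cmod (a + b))\<^sup>2 \<le> (cmod a + cmod b)\<^sup>2" by (simp add: power_mono)
  also have "\<dots> \<le> 2 * (cmod a)\<^sup>2 + 2 * (cmod b)\<^sup>2"
  proof -
    have "0 \<le> (cmod a - cmod b)\<^sup>2" by simp
    then show ?thesis by (simp add: power2_eq_square algebra_simps)
  qed
  finally show ?thesis .
qed

lemma L2_add: assumes "g \<in> L2" "h \<in> L2" shows "(\<lambda>p. g p + h p) \<in> L2"
proof (rule L2I)
  show "(\<lambda>p. g p + h p) \<in> borel_measurable borel" using L2D assms by auto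
  show "integrable nu (\<lambda>p. (cmod (g p + h p))\<^sup>2)"
  proof (rule Bochner_Integration.integrable_bound[where f="\<lambda>p. 2 * (cmod (g p))\<^sup>2 + 2 * (cmod (h p))\<^sup>2"])
    show "integrable nu (\<lambda>p. 2 * (cmod (g p))\<^sup>2 + 2 * (cmod (h p))\<^sup>2)"
      using L2D assms by (intro Bochner_Integration.integrable_add Bochner_Integration.integrable_mult_right) auto
    show "(\<lambda>p. (cmod (g p + h p))\<^sup>2) \<in> borel_measurable nu" using L2D assms by auto
    show "AE x in nu. norm ((cmod (g x + h x))\<^sup>2) \<le> norm (2 * (cmod (g x))\<^sup>2 + 2 * (cmod (h x))\<^sup>2)"
      using sq_add_le by (auto intro!: AE_I2 simp: abs_le_square_iff)
  qed
qed

lemma L2_mult_bounded: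
  assumes "g \<in> L2" "h \<in> borel_measurable borel" "\<And>p. cmod (h p) \<le> B"
  shows "(\<lambda>p. h p * g p) \<in> L2"
proof (rule L2I)
  show "(\<lambda>p. h p * g p) \<in> borel_measurable borel" using L2D assms by auto
  show "integrable nu (\<lambda>p. (cmod (h p * g p))\<^sup>2)"
  proof (rule Bochner_Integration.integrable_bound[where f="\<lambda>p. B\<^sup>2 * (cmod (g p))\<^sup>2"])
    show "integrable nu (\<lambda>p. B\<^sup>2 * (cmod (g p))\<^sup>2)"
      using L2D assms by (intro Bochner_Integration.integrable_mult_right) auto
    show "(\<lambda>p. (cmod (h p * g p))\<^sup>2) \<in> borel_measurable nu" using L2D assms by auto
    show "AE x in nu. norm ((cmod (h x * g x))\<^sup>2) \<le> norm (B\<^sup>2 * (cmod (g x))\<^sup>2)"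
    proof (intro AE_I2)
      fix x
      have "cmod (h x) * cmod (g x) \<le> B * cmod (g x)"
        using assms(3) by (simp add: mult_right_mono)
      moreover have "0 \<le> cmod (h x) * cmod (g x)" by simp
      ultimately have "(cmod (h x) * cmod (g x))\<^sup>2 \<le> (B * cmod (g x))\<^sup>2" by (rule power_mono)
      then show "norm ((cmod (h x * g x))\<^sup>2) \<le> norm (B\<^sup>2 * (cmod (g x))\<^sup>2)"
        by (simp add: norm_mult power_mult_distrib)
    qed
  qed
qed

lemma L2_scale: assumes "g \<in> L2" shows "(\<lambda>p. a * g p) \<in> L2"
  using L2_mult_bounded[OF assms, of "\<lambda>_. a" "cmod a"] by simp

lemma L2_minus: assumes "g \<in> L2" "h \<in> L2" shows "(\<lambda>p. g p - h p) \<in> L2"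
  using L2_add[OF assms(1) L2_scale[OF assms(2), of "-1"]] by simp

lemma L2_zero: "(\<lambda>p. 0) \<in> L2"
  by (rule L2_bounded[where B=0]) auto

lemma L2_sum: "finite N \<Longrightarrow> (\<And>n. n \<in> N \<Longrightarrow> g n \<in> L2) \<Longrightarrow> (\<lambda>p. \<Sum>n\<in>N. g n p) \<in> L2"
  by (induction N rule: finite_induct) (auto intro: L2_add L2_zero)

lemma prod_le_sq: "cmod (a * cnj b) \<le> (cmod a)\<^sup>2 + (cmod b)\<^sup>2"
proof -
  have "0 \<le> (cmod a - cmod b)\<^sup>2" by simp
  then have "2 * (cmod a * cmod b) \<le> (cmod a)\<^sup>2 + (cmod b)\<^sup>2"
    by (simp add: power2_eq_square algebra_simps)
  moreover have "0 \<le> cmod a * cmod b" by simp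
  ultimately have "cmod a * cmod b \<le> (cmod a)\<^sup>2 + (cmod b)\<^sup>2" by linarith
  then show ?thesis by (simp add: norm_mult)
qed

lemma L2_prod_integrable: assumes "g \<in> L2" "h \<in> L2" shows "integrable nu (\<lambda>p. g p * cnj (h p))"
proof (rule Bochner_Integration.integrable_bound[where f="\<lambda>p. (cmod (g p))\<^sup>2 + (cmod (h p))\<^sup>2"])
  show "integrable nu (\<lambda>p. (cmod (g p))\<^sup>2 + (cmod (h p))\<^sup>2)"
    using L2D assms by (intro Bochner_Integration.integrable_add) auto
  have [measurable]: "g \<in> borel_measurable borel" "h \<in> borel_measurable borel" using L2D assms by auto
  show "(\<lambda>p. g p * cnj (h p)) \<in> borel_measurable nu" by simp
  show "AE x in nu. norm (g x * cnj (h x)) \<le> norm ((cmod (g x))\<^sup>2 + (cmod (h x))\<^sup>2)"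
    using prod_le_sq by (auto intro!: AE_I2)
qed

lemma ip_self: assumes "g \<in> L2" shows "ip g g = complex_of_real (nrm2 g)"
proof -
  have "ip g g = (\<integral>p. complex_of_real ((cmod (g p))\<^sup>2) \<partial>nu)"
    unfolding ip_def by (intro Bochner_Integration.integral_cong) (simp_all add: complex_norm_square del: of_real_power)
  also have "\<dots> = complex_of_real (nrm2 g)"
    unfolding nrm2_def by (rule integral_complex_of_real)
  finally show ?thesis .
qed

lemma ip_add_left: assumes "g \<in> L2" "h \<in> L2" "k \<in> L2"
  shows "ip (\<lambda>p. g p + h p) k = ip g k + ip h k"
  unfolding ip_def using L2_prod_integrable[OF assms(1,3)] L2_prod_integrable[OF assms(2,3)]
  by (simp add: distrib_right)

lemma ip_scale_left: "ip (\<lambda>p. a * g p) k = a * ip g k"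
  unfolding ip_def by (simp add: mult.assoc)

lemma ip_cnj: "ip h g = cnj (ip g h)"
  unfolding ip_def Bochner_Integration.integral_cnj[symmetric] by (simp add: mult.commute)

lemma ip_add_right: assumes "g \<in> L2" "h \<in> L2" "k \<in> L2"
  shows "ip k (\<lambda>p. g p + h p) = ip k g + ip k h"
  by (metis ip_cnj ip_add_left[OF assms] complex_cnj_add)

lemma ip_scale_right: "ip k (\<lambda>p. a * g p) = cnj a * ip k g"
  by (metis ip_cnj ip_scale_left complex_cnj_mult complex_cnj_cnj)

lemma ee_norm[simp]: "cmod (ee x p) = 1"
  unfolding ee_def by (simp add: norm_exp_i_times)

lemma ee_meas[measurable]: "ee x \<in> borel_measurable borel"
  unfolding ee_def dotZ_def by (intro borel_measurable_continuous_onI continuous_intros)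

lemma ee_L2: "ee x \<in> L2"
  by (rule L2_bounded[where B=1]) auto

lemma coef_bound1: assumes "integrable nu g" shows "cmod (coefE x g) \<le> (\<integral>p. cmod (g p) \<partial>nu)"
proof -
  have "cmod (coefE x g) \<le> (\<integral>p. norm (cnj (ee x p) * g p) \<partial>nu)"
    unfolding coefE_def by (rule integral_norm_bound)
  also have "\<dots> = (\<integral>p. cmod (g p) \<partial>nu)" by (simp add: norm_mult)
  finally show ?thesis .
qed

lemma L1_le_L2: assumes "g \<in> L2" shows "(\<integral>p. cmod (g p) \<partial>nu) \<le> L2norm g"
proof -
  define m where "m = (\<integral>p. cmod (g p) \<partial>nu)"
  have i1: "integrable nu (\<lambda>p. cmod (g p))" by (rule L2_norm_integrable[OF assms])
  have i2: "integrable nu (\<lambda>p. (cmod (g p))\<^sup>2)" by (rule L2D(2)[OF assms])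
  have "0 \<le> (\<integral>p. (cmod (g p) - m)\<^sup>2 \<partial>nu)" by (rule integral_nonneg_AE) auto
  also have "(\<integral>p. (cmod (g p) - m)\<^sup>2 \<partial>nu) = (\<integral>p. (cmod (g p))\<^sup>2 - 2 * m * cmod (g p) + m\<^sup>2 \<partial>nu)"
    by (simp add: power2_diff algebra_simps)
  also have "\<dots> = nrm2 g - 2 * m * m + m\<^sup>2"
    using i1 i2 by (simp add: nrm2_def m_def measure_nu_UNIV)
  finally have "m\<^sup>2 \<le> nrm2 g" by (simp add: power2_eq_square)
  then have "sqrt (m\<^sup>2) \<le> sqrt (nrm2 g)" by (rule real_sqrt_le_mono)
  moreover have "0 \<le> m" unfolding m_def by (rule integral_nonneg_AE) auto
  ultimately show ?thesis by (simp add: m_def L2norm_nrm2)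
qed

lemma coef_bound: assumes "g \<in> L2" shows "cmod (coefE x g) \<le> L2norm g"
  by (rule order_trans[OF coef_bound1[OF L2_integrable[OF assms]] L1_le_L2[OF assms]])

lemma coef_add: assumes "g \<in> L2" "h \<in> L2"
  shows "coefE x (\<lambda>p. g p + a * h p) = coefE x g + a * coefE x h"
proof -
  have "integrable nu (\<lambda>p. cnj (ee x p) * g p)" "integrable nu (\<lambda>p. cnj (ee x p) * h p)"
    using L2_prod_integrable[OF assms(1) ee_L2] L2_prod_integrable[OF assms(2) ee_L2]
    by (simp_all add: mult.commute)
  then show ?thesis unfolding coefE_def by (simp add: distrib_left algebra_simps)
qed

lemma coef_ip: "coefE x g = cnj (ip (ee x) g)"
  unfolding coefE_def ip_def Bochner_Integration.integral_cnj[symmetric] by (simp add: mult.commute)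


lemma L2norm_nonneg[simp]: "0 \<le> L2norm g"
  by (simp add: L2norm_nrm2 nrm2_nonneg)

definition bb :: "nat \<Rightarrow> int \<times> int" where "bb = from_nat_into UNIV"

lemma bij_bb: "bij_betw bb UNIV UNIV"
  unfolding bb_def by (rule bij_betw_from_nat_into) (auto simp: finite_prod)

definition KK :: "(int \<times> int \<Rightarrow> real) \<Rightarrow> (real \<times> real \<Rightarrow> complex) \<Rightarrow> real \<times> real \<Rightarrow> complex" where
  "KK c g p = (\<Sum>\<^sub>\<infinity>x. complex_of_real (c x) * Proj x g p)"

lemma infsum_as_suminf:
  fixes F :: "int \<times> int \<Rightarrow> complex" and c :: "int \<times> int \<Rightarrow> real"
  assumes cpos: "\<forall>x. c x \<ge> 0" and csum: "c summable_on UNIV"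
    and bnd: "\<And>x. cmod (F x) \<le> C * c x"
  shows "summable (\<lambda>n. cmod (F (bb n)))" "infsum F UNIV = (\<Sum>n. F (bb n))"
    "cmod (infsum F UNIV) \<le> C * infsum c UNIV"
proof -
  have s1: "(\<lambda>n. c (bb n)) summable_on UNIV"
    using summable_on_reindex_bij_betw[OF bij_bb, of c] csum by simp
  have sc: "summable (\<lambda>n. c (bb n))" by (rule summable_on_imp_summable[OF s1])
  have ic: "infsum c UNIV = (\<Sum>n. c (bb n))"
  proof -
    have "((\<lambda>n. c (bb n)) has_sum (\<Sum>n. c (bb n))) UNIV"
      by (rule sums_nonneg_imp_has_sum) (use sc in \<open>simp add: summable_sums\<close>, use cpos in blast)
    then have "infsum (\<lambda>n. c (bb n)) UNIV = (\<Sum>n. c (bb n))" by (rule infsumI)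
    then show ?thesis using infsum_reindex_bij_betw[OF bij_bb, of c] by simp
  qed
  show sF: "summable (\<lambda>n. cmod (F (bb n)))"
    by (rule summable_comparison_test[OF _ summable_mult[OF sc, of C]]) (use bnd in auto)
  have "((\<lambda>n. F (bb n)) has_sum (\<Sum>n. F (bb n))) UNIV"
    by (rule norm_summable_imp_has_sum[OF sF]) (use summable_norm_cancel[OF sF] in \<open>simp add: summable_sums\<close>)
  then have "(F has_sum (\<Sum>n. F (bb n))) UNIV"
    using has_sum_reindex_bij_betw[OF bij_bb, of F] by simp
  then show iF: "infsum F UNIV = (\<Sum>n. F (bb n))" by (rule infsumI)
  have "cmod (\<Sum>n. F (bb n)) \<le> (\<Sum>n. cmod (F (bb n)))" by (rule summable_norm[OF sF])
  also have "\<dots> \<le> (\<Sum>n. C * c (bb n))"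
    by (rule suminf_le) (use bnd sF summable_mult[OF sc, of C] in auto)
  also have "\<dots> = C * infsum c UNIV" by (simp add: suminf_mult[OF sc] ic)
  finally show "cmod (infsum F UNIV) \<le> C * infsum c UNIV" by (simp add: iF)
qed

context
  fixes c :: "int \<times> int \<Rightarrow> real"
  assumes cpos: "\<forall>x. c x \<ge> 0" and csum: "c summable_on UNIV"
begin

lemma cpos': "0 \<le> c x" using cpos by blast

lemma csum_nonneg: "infsum c UNIV \<ge> 0"
  by (rule infsum_nonneg) (simp add: cpos')

lemma KK_term_bound:
  assumes "g \<in> L2" shows "cmod (complex_of_real (c x) * Proj x g p) \<le> L2norm g * c x"
proof -
  have "cmod (complex_of_real (c x) * Proj x g p) = c x * cmod (coefE x g)"
    using cpos' by (simp add: Proj_def norm_mult)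
  also have "\<dots> \<le> c x * L2norm g" using cpos' coef_bound[OF assms] by (simp add: mult_left_mono)
  finally show ?thesis by (simp add: mult.commute)
qed

lemma KK_suminf: assumes "g \<in> L2"
  shows "KK c g p = (\<Sum>n. complex_of_real (c (bb n)) * Proj (bb n) g p)"
    "summable (\<lambda>n. cmod (complex_of_real (c (bb n)) * Proj (bb n) g p))"
    "cmod (KK c g p) \<le> L2norm g * infsum c UNIV"
  using infsum_as_suminf[OF cpos csum KK_term_bound[OF assms]] unfolding KK_def by auto

lemma KK_bound1: assumes "integrable nu g"
  shows "cmod (KK c g p) \<le> (\<integral>q. cmod (g q) \<partial>nu) * infsum c UNIV"
proof -
  have "cmod (complex_of_real (c x) * Proj x g p) \<le> (\<integral>q. cmod (g q) \<partial>nu) * c x" for x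
  proof -
    have "cmod (complex_of_real (c x) * Proj x g p) = c x * cmod (coefE x g)"
      using cpos' by (simp add: Proj_def norm_mult)
    also have "\<dots> \<le> c x * (\<integral>q. cmod (g q) \<partial>nu)" using cpos' coef_bound1[OF assms] by (simp add: mult_left_mono)
    finally show ?thesis by (simp add: mult.commute)
  qed
  from infsum_as_suminf(3)[OF cpos csum this] show ?thesis unfolding KK_def .
qed

lemma KK_meas: assumes "g \<in> L2" shows "KK c g \<in> borel_measurable borel"
proof -
  have "KK c g = (\<lambda>p. \<Sum>n. complex_of_real (c (bb n)) * Proj (bb n) g p)"
    using KK_suminf(1)[OF assms] by auto
  also have "\<dots> \<in> borel_measurable borel"
    unfolding Proj_def by measurable
  finally show ?thesis .
qed

lemma KK_L2: assumes "g \<in> L2" shows "KK c g \<in> L2"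
  by (rule L2_bounded[OF KK_meas[OF assms] KK_suminf(3)[OF assms]])

lemma KK_lin: assumes "g \<in> L2" "h \<in> L2"
  shows "KK c (\<lambda>p. g p + a * h p) p = KK c g p + a * KK c h p"
proof -
  have gh: "(\<lambda>p. g p + a * h p) \<in> L2" by (intro L2_add L2_scale assms)
  have s1: "summable (\<lambda>n. complex_of_real (c (bb n)) * Proj (bb n) g p)"
    by (rule summable_norm_cancel[OF KK_suminf(2)[OF assms(1)]])
  have s2: "summable (\<lambda>n. complex_of_real (c (bb n)) * Proj (bb n) h p)"
    by (rule summable_norm_cancel[OF KK_suminf(2)[OF assms(2)]])
  have eq: "complex_of_real (c (bb n)) * Proj (bb n) (\<lambda>p. g p + a * h p) p
      = complex_of_real (c (bb n)) * Proj (bb n) g p + a * (complex_of_real (c (bb n)) * Proj (bb n) h p)" for n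
    unfolding Proj_def coef_add[OF assms] by algebra
  have "KK c (\<lambda>p. g p + a * h p) p = (\<Sum>n. complex_of_real (c (bb n)) * Proj (bb n) g p
        + a * (complex_of_real (c (bb n)) * Proj (bb n) h p))"
    unfolding KK_suminf(1)[OF gh] eq ..
  also have "\<dots> = KK c g p + a * KK c h p"
    unfolding KK_suminf(1)[OF assms(1)] KK_suminf(1)[OF assms(2)]
      suminf_add[OF s1 summable_mult[OF s2], symmetric] suminf_mult[OF s2] ..
  finally show ?thesis .
qed

lemma ip_KK: assumes "g \<in> L2" "h \<in> L2"
  shows "ip (KK c g) h = (\<Sum>n. complex_of_real (c (bb n)) * coefE (bb n) g * cnj (coefE (bb n) h))"
    "summable (\<lambda>n. complex_of_real (c (bb n)) * coefE (bb n) g * cnj (coefE (bb n) h))"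
proof -
  define F where "F n p = complex_of_real (c (bb n)) * Proj (bb n) g p * cnj (h p)" for n p
  have [measurable]: "h \<in> borel_measurable borel" using L2D[OF assms(2)] by simp
  have intF: "integrable nu (F n)" for n
  proof -
    have "integrable nu (\<lambda>p. (complex_of_real (c (bb n)) * coefE (bb n) g) * (ee (bb n) p * cnj (h p)))"
      using L2_prod_integrable[OF ee_L2 assms(2)] by (rule integrable_mult_right)
    then show ?thesis unfolding F_def Proj_def by (simp add: algebra_simps)
  qed
  have normF: "cmod (F n p) \<le> L2norm g * c (bb n) * cmod (h p)" for n p
    unfolding F_def using KK_term_bound[OF assms(1), of "bb n" p]
    by (simp add: norm_mult mult_right_mono)
  have sc: "summable (\<lambda>n. c (bb n))"
    using summable_on_imp_summable summable_on_reindex_bij_betw[OF bij_bb, of c] csum by auto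
  have AEs: "AE p in nu. summable (\<lambda>n. cmod (F n p))"
  proof (rule AE_I2)
    fix p
    show "summable (\<lambda>n. cmod (F n p))"
      by (rule summable_comparison_test[OF _ summable_mult2[OF summable_mult[OF sc, of "L2norm g"], of "cmod (h p)"]])
         (use normF in auto)
  qed
  have intnorm: "(\<integral>p. cmod (F n p) \<partial>nu) \<le> L2norm g * c (bb n) * (\<integral>p. cmod (h p) \<partial>nu)" for n
  proof -
    have "(\<integral>p. cmod (F n p) \<partial>nu) \<le> (\<integral>p. L2norm g * c (bb n) * cmod (h p) \<partial>nu)"
      by (rule integral_mono) (use intF normF L2_norm_integrable[OF assms(2)] in auto)
    then show ?thesis by simp
  qed
  have sI: "summable (\<lambda>n. \<integral>p. cmod (F n p) \<partial>nu)"
    by (rule summable_comparison_test[OF _ summable_mult2[OF summable_mult[OF sc, of "L2norm g"], of "\<integral>p. cmod (h p) \<partial>nu"]])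
       (use intnorm in auto)
  have "ip (KK c g) h = (\<integral>p. (\<Sum>n. F n p) \<partial>nu)"
    unfolding ip_def F_def
    by (intro Bochner_Integration.integral_cong refl)
       (simp add: KK_suminf(1)[OF assms(1)] suminf_mult2[OF summable_norm_cancel[OF KK_suminf(2)[OF assms(1)]]])
  also have "\<dots> = (\<Sum>n. integral\<^sup>L nu (F n))"
    by (rule integral_suminf[OF intF AEs sI])
  also have "(\<lambda>n. integral\<^sup>L nu (F n)) = (\<lambda>n. complex_of_real (c (bb n)) * coefE (bb n) g * cnj (coefE (bb n) h))"
  proof
    fix n
    have "integral\<^sup>L nu (F n) = complex_of_real (c (bb n)) * coefE (bb n) g * (\<integral>p. ee (bb n) p * cnj (h p) \<partial>nu)"
      unfolding F_def Proj_def by (simp add: mult.assoc)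
    also have "(\<integral>p. ee (bb n) p * cnj (h p) \<partial>nu) = cnj (coefE (bb n) h)"
      unfolding coefE_def Bochner_Integration.integral_cnj[symmetric] by simp
    finally show "integral\<^sup>L nu (F n) = complex_of_real (c (bb n)) * coefE (bb n) g * cnj (coefE (bb n) h)" .
  qed
  finally show "ip (KK c g) h = (\<Sum>n. complex_of_real (c (bb n)) * coefE (bb n) g * cnj (coefE (bb n) h))" .
  show "summable (\<lambda>n. complex_of_real (c (bb n)) * coefE (bb n) g * cnj (coefE (bb n) h))"
  proof (rule summable_comparison_test[OF _ summable_mult[OF sc, of "L2norm g * L2norm h"]])
    show "\<exists>N. \<forall>n\<ge>N. norm (complex_of_real (c (bb n)) * coefE (bb n) g * cnj (coefE (bb n) h))
        \<le> L2norm g * L2norm h * c (bb n)"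
    proof (intro exI allI impI)
      fix n
      have "cmod (coefE (bb n) g) * cmod (coefE (bb n) h) \<le> L2norm g * L2norm h"
        using coef_bound[OF assms(1)] coef_bound[OF assms(2)] by (intro mult_mono) auto
      then have "c (bb n) * (cmod (coefE (bb n) g) * cmod (coefE (bb n) h)) \<le> c (bb n) * (L2norm g * L2norm h)"
        using cpos' by (intro mult_left_mono) auto
      then show "norm (complex_of_real (c (bb n)) * coefE (bb n) g * cnj (coefE (bb n) h))
        \<le> L2norm g * L2norm h * c (bb n)"
        using cpos' by (simp add: norm_mult mult.commute mult.left_commute)
    qed
  qed
qed

end


lemma cos_pm: "cos ((x::real) + y) + cos (x - y) = 2 * cos x * cos y"
  by (simp add: cos_add cos_diff)

lemma cos_sum_pair: "cos ((a::real) + b) + cos a = 2 * cos (a + b/2) * cos (b/2)"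
proof -
  have e1: "a + b/2 + b/2 = a + b" by simp
  have e2: "a + b/2 - b/2 = a" by simp
  show ?thesis using cos_pm[of "a + b/2" "b/2"] unfolding e1 e2 .
qed

lemma cos_half_nonneg: assumes "b \<in> {-pi..<pi}" shows "0 \<le> cos (b/2)"
  using assms by (intro cos_ge_zero) auto

lemma cos_pair_le: assumes "b \<in> {-pi..<pi}" shows "cos (a + b) + cos a \<le> 2 * cos (b/2)"
proof -
  have "cos (a + b/2) * cos (b/2) \<le> 1 * cos (b/2)"
    by (rule mult_right_mono[OF cos_le_one cos_half_nonneg[OF assms]])
  then show ?thesis unfolding cos_sum_pair by simp
qed

context
  fixes eps :: real and k :: "real \<times> real"
  assumes eps: "eps \<ge> 0" and ktor: "k \<in> torus"
begin

lemma k1: "fst k \<in> {-pi..<pi}" and k2: "snd k \<in> {-pi..<pi}"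
  using ktor by (auto simp: torus_def)

lemma ff_expand: "ff eps k p = eps * (4 - (cos (fst p + fst k) + cos (fst p)) - (cos (snd p + snd k) + cos (snd p)))"
  unfolding ff_def cosT_def by (simp add: algebra_simps)

lemma zz_expand: "zz eps k = eps * (4 - 2 * cos (fst k / 2) - 2 * cos (snd k / 2))"
  unfolding zz_def cosT_def by (simp add: algebra_simps)

lemma ff_ge: "zz eps k \<le> ff eps k p"
proof -
  have "(cos (fst p + fst k) + cos (fst p)) + (cos (snd p + snd k) + cos (snd p))
      \<le> 2 * cos (fst k / 2) + 2 * cos (snd k / 2)"
    using cos_pair_le[OF k1] cos_pair_le[OF k2] by (intro add_mono)
  then show ?thesis unfolding ff_expand zz_expand using eps
    by (intro mult_left_mono) auto
qed

lemma ff_le: "ff eps k p \<le> 8 * eps"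
proof -
  have "-4 \<le> (cos (fst p + fst k) + cos (fst p)) + (cos (snd p + snd k) + cos (snd p))"
    using cos_ge_minus_one[of "fst p + fst k"] cos_ge_minus_one[of "fst p"]
      cos_ge_minus_one[of "snd p + snd k"] cos_ge_minus_one[of "snd p"] by linarith
  then have "eps * (4 - (cos (fst p + fst k) + cos (fst p)) - (cos (snd p + snd k) + cos (snd p))) \<le> eps * 8"
    using eps by (intro mult_left_mono) auto
  then show ?thesis unfolding ff_expand by simp
qed

lemma zz_nonneg: "0 \<le> zz eps k"
proof -
  have "2 * cos (fst k / 2) + 2 * cos (snd k / 2) \<le> 4"
    using cos_le_one[of "fst k / 2"] cos_le_one[of "snd k / 2"] by linarith
  then show ?thesis unfolding zz_expand using eps by simp
qed

lemma ff_p0: "ff eps k (- fst k / 2, - snd k / 2) = zz eps k"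
proof -
  have a: "cos (- fst k / 2 + fst k) + cos (- fst k / 2) = 2 * cos (fst k / 2)"
  proof -
    have "- fst k / 2 + fst k = fst k / 2" by simp
    then show ?thesis by simp
  qed
  have b: "cos (- snd k / 2 + snd k) + cos (- snd k / 2) = 2 * cos (snd k / 2)"
  proof -
    have "- snd k / 2 + snd k = snd k / 2" by simp
    then show ?thesis by simp
  qed
  show ?thesis unfolding ff_expand zz_expand using a b by simp
qed

lemma ff_cont: "continuous_on UNIV (ff eps k)"
  unfolding ff_expand[abs_def] by (intro continuous_intros)

lemma ff_meas[measurable]: "ff eps k \<in> borel_measurable borel"
  by (rule borel_measurable_continuous_onI[OF ff_cont])

lemma ff_abs: "\<bar>ff eps k p\<bar> \<le> 8 * eps"
  using ff_ge[of p] ff_le[of p] zz_nonneg by auto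

end


definition Top :: "real \<Rightarrow> real \<times> real \<Rightarrow> (int \<times> int \<Rightarrow> real) \<Rightarrow>
    (real \<times> real \<Rightarrow> complex) \<Rightarrow> (real \<times> real \<Rightarrow> complex)" where
  "Top eps k c g = (\<lambda>p. Mult (ff eps k) g p + KK c g p)"

lemma ff_meas2[measurable]: "ff e q \<in> borel_measurable borel"
  unfolding ff_def[abs_def] cosT_def by (intro borel_measurable_continuous_onI continuous_intros)

lemmas cnj_suminf = bounded_linear.suminf[OF bounded_linear_cnj]

context
  fixes eps :: real and k :: "real \<times> real" and c :: "int \<times> int \<Rightarrow> real"
  assumes eps: "eps \<ge> 0" and ktor: "k \<in> torus"
    and cpos: "\<forall>x. c x \<ge> 0" and csum: "c summable_on UNIV"
begin

lemma cpos2: "0 \<le> c x" using cpos by blast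

lemma c_summable: "summable (\<lambda>n. c (bb n))"
  using summable_on_imp_summable summable_on_reindex_bij_betw[OF bij_bb, of c] csum by auto

lemma c_suminf: "(\<Sum>n. c (bb n)) = infsum c UNIV"
proof -
  have "((\<lambda>n. c (bb n)) has_sum (\<Sum>n. c (bb n))) UNIV"
    by (rule sums_nonneg_imp_has_sum) (use c_summable in \<open>simp add: summable_sums\<close>, use cpos2 in blast)
  then have "infsum (\<lambda>n. c (bb n)) UNIV = (\<Sum>n. c (bb n))" by (rule infsumI)
  then show ?thesis using infsum_reindex_bij_betw[OF bij_bb, of c] by simp
qed

lemma Mult_L2: assumes "g \<in> L2" shows "Mult (ff eps k) g \<in> L2"
proof -
  have "(\<lambda>p. complex_of_real (ff eps k p) * g p) \<in> L2"
    by (rule L2_mult_bounded[OF assms, where B="8*eps"]) (use ff_abs[OF eps ktor] in auto)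
  then show ?thesis by (simp add: Mult_def)
qed

lemma T_L2: assumes "g \<in> L2" shows "Top eps k c g \<in> L2"
  unfolding Top_def by (rule L2_add[OF Mult_L2[OF assms] KK_L2[OF cpos csum assms]])

lemma T_lin: assumes "g \<in> L2" "h \<in> L2"
  shows "Top eps k c (\<lambda>p. g p + a * h p) = (\<lambda>p. Top eps k c g p + a * Top eps k c h p)"
  unfolding Top_def Mult_def KK_lin[OF cpos csum assms]
  by (simp add: algebra_simps)

lemma ip_T: assumes "g \<in> L2" "h \<in> L2"
  shows "ip (Top eps k c g) h = (\<integral>p. complex_of_real (ff eps k p) * (g p * cnj (h p)) \<partial>nu)
     + (\<Sum>n. complex_of_real (c (bb n)) * coefE (bb n) g * cnj (coefE (bb n) h))"
proof -
  have "ip (Top eps k c g) h = ip (Mult (ff eps k) g) h + ip (KK c g) h"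
    unfolding Top_def by (rule ip_add_left[OF Mult_L2[OF assms(1)] KK_L2[OF cpos csum assms(1)] assms(2)])
  also have "ip (Mult (ff eps k) g) h = (\<integral>p. complex_of_real (ff eps k p) * (g p * cnj (h p)) \<partial>nu)"
    unfolding ip_def Mult_def by (simp add: mult.assoc)
  finally show ?thesis using ip_KK(1)[OF cpos csum assms] by simp
qed

lemma T_herm: assumes "g \<in> L2" "h \<in> L2"
  shows "ip (Top eps k c g) h = cnj (ip (Top eps k c h) g)"
proof -
  have s: "summable (\<lambda>n. complex_of_real (c (bb n)) * coefE (bb n) h * cnj (coefE (bb n) g))"
    by (rule ip_KK(2)[OF cpos csum assms(2,1)])
  have "cnj (\<Sum>n. complex_of_real (c (bb n)) * coefE (bb n) h * cnj (coefE (bb n) g))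
      = (\<Sum>n. cnj (complex_of_real (c (bb n)) * coefE (bb n) h * cnj (coefE (bb n) g)))"
    by (rule cnj_suminf[OF s])
  also have "\<dots> = (\<Sum>n. complex_of_real (c (bb n)) * coefE (bb n) g * cnj (coefE (bb n) h))"
    by (simp add: mult.commute mult.left_commute)
  finally have e2: "cnj (\<Sum>n. complex_of_real (c (bb n)) * coefE (bb n) h * cnj (coefE (bb n) g))
      = (\<Sum>n. complex_of_real (c (bb n)) * coefE (bb n) g * cnj (coefE (bb n) h))" .
  have e1: "cnj (\<integral>p. complex_of_real (ff eps k p) * (h p * cnj (g p)) \<partial>nu)
      = (\<integral>p. complex_of_real (ff eps k p) * (g p * cnj (h p)) \<partial>nu)"
    unfolding Bochner_Integration.integral_cnj[symmetric] by (simp add: mult.commute mult.left_commute)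
  show ?thesis unfolding ip_T[OF assms] ip_T[OF assms(2,1)] complex_cnj_add e1 e2 ..
qed

lemma T_real: assumes "g \<in> L2" shows "Im (ip (Top eps k c g) g) = 0"
proof -
  have "ip (Top eps k c g) g = cnj (ip (Top eps k c g) g)" by (rule T_herm[OF assms assms])
  then show ?thesis by (metis cnj.simps(2) complex_cnj_cancel_iff  neg_equal_zero)
qed

lemma T_range: assumes "g \<in> L2"
  shows "zz eps k * nrm2 g \<le> Re (ip (Top eps k c g) g)"
        "Re (ip (Top eps k c g) g) \<le> (8 * eps + infsum c UNIV) * nrm2 g"
proof -
  have [measurable]: "g \<in> borel_measurable borel" using L2D[OF assms] by simp
  have i2: "integrable nu (\<lambda>p. (cmod (g p))\<^sup>2)" using L2D[OF assms] by simp
  have ifg: "integrable nu (\<lambda>p. ff eps k p * (cmod (g p))\<^sup>2)"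
  proof (rule Bochner_Integration.integrable_bound[where f="\<lambda>p. 8 * eps * (cmod (g p))\<^sup>2"])
    show "integrable nu (\<lambda>p. 8 * eps * (cmod (g p))\<^sup>2)" using i2 by simp
    show "(\<lambda>p. ff eps k p * (cmod (g p))\<^sup>2) \<in> borel_measurable nu" by simp
    show "AE x in nu. norm (ff eps k x * (cmod (g x))\<^sup>2) \<le> norm (8 * eps * (cmod (g x))\<^sup>2)"
      using ff_abs[OF eps ktor] eps by (auto intro!: AE_I2 mult_right_mono simp: abs_mult)
  qed
  define I where "I = (\<integral>p. ff eps k p * (cmod (g p))\<^sup>2 \<partial>nu)"
  have eI: "(\<integral>p. complex_of_real (ff eps k p) * (g p * cnj (g p)) \<partial>nu) = complex_of_real I"
  proof -
    have "(\<integral>p. complex_of_real (ff eps k p) * (g p * cnj (g p)) \<partial>nu)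
        = (\<integral>p. complex_of_real (ff eps k p * (cmod (g p))\<^sup>2) \<partial>nu)"
      by (intro Bochner_Integration.integral_cong refl) (simp add: complex_norm_square del: of_real_power)
    also have "\<dots> = complex_of_real I" unfolding I_def by (rule integral_complex_of_real)
    finally show ?thesis .
  qed
  have I1: "zz eps k * nrm2 g \<le> I"
  proof -
    have "zz eps k * nrm2 g = (\<integral>p. zz eps k * (cmod (g p))\<^sup>2 \<partial>nu)" by (simp add: nrm2_def)
    also have "\<dots> \<le> I" unfolding I_def
      by (rule integral_mono) (use i2 ifg ff_ge[OF eps ktor] in \<open>auto intro: mult_right_mono\<close>)
    finally show ?thesis .
  qed
  have I2: "I \<le> 8 * eps * nrm2 g"
  proof -
    have "I \<le> (\<integral>p. 8 * eps * (cmod (g p))\<^sup>2 \<partial>nu)" unfolding I_def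
      by (rule integral_mono) (use i2 ifg ff_le[OF eps ktor] in \<open>auto intro: mult_right_mono\<close>)
    also have "\<dots> = 8 * eps * nrm2 g" by (simp add: nrm2_def)
    finally show ?thesis .
  qed
  define S where "S = (\<Sum>n. c (bb n) * (cmod (coefE (bb n) g))\<^sup>2)"
  have termb: "c (bb n) * (cmod (coefE (bb n) g))\<^sup>2 \<le> c (bb n) * nrm2 g" for n
  proof -
    have "cmod (coefE (bb n) g) \<le> sqrt (nrm2 g)" using coef_bound[OF assms] by (simp add: L2norm_nrm2)
    then have "(cmod (coefE (bb n) g))\<^sup>2 \<le> (sqrt (nrm2 g))\<^sup>2" by (intro power_mono) auto
    then have "(cmod (coefE (bb n) g))\<^sup>2 \<le> nrm2 g" using nrm2_nonneg by simp
    then show ?thesis using cpos2 by (intro mult_left_mono) auto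
  qed
  have sS: "summable (\<lambda>n. c (bb n) * (cmod (coefE (bb n) g))\<^sup>2)"
    by (rule summable_comparison_test[OF _ summable_mult2[OF c_summable, of "nrm2 g"]])
       (use termb cpos2 in auto)
  have S1: "0 \<le> S" unfolding S_def by (rule suminf_nonneg[OF sS]) (use cpos2 in auto)
  have S2: "S \<le> infsum c UNIV * nrm2 g"
  proof -
    have "S \<le> (\<Sum>n. c (bb n) * nrm2 g)" unfolding S_def
      by (rule suminf_le[OF termb sS summable_mult2[OF c_summable]])
    also have "\<dots> = infsum c UNIV * nrm2 g" by (simp add: suminf_mult2[OF c_summable, symmetric] c_suminf)
    finally show ?thesis .
  qed
  have eS: "(\<Sum>n. complex_of_real (c (bb n)) * coefE (bb n) g * cnj (coefE (bb n) g)) = complex_of_real S"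
  proof -
    have "(\<Sum>n. complex_of_real (c (bb n)) * coefE (bb n) g * cnj (coefE (bb n) g))
        = (\<Sum>n. complex_of_real (c (bb n) * (cmod (coefE (bb n) g))\<^sup>2))"
      by (simp add: mult.assoc complex_norm_square del: of_real_power)
    also have "\<dots> = complex_of_real S" unfolding S_def by (rule suminf_of_real[OF sS, symmetric])
    finally show ?thesis .
  qed
  have eip: "ip (Top eps k c g) g = complex_of_real (I + S)"
    unfolding ip_T[OF assms assms] eI eS by simp
  show "zz eps k * nrm2 g \<le> Re (ip (Top eps k c g) g)" unfolding eip using I1 S1 by simp
  show "Re (ip (Top eps k c g) g) \<le> (8 * eps + infsum c UNIV) * nrm2 g"
    unfolding eip using I2 S2 by (simp add: algebra_simps)
qed

end


lemma real_polar:
  fixes N P r :: real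
  assumes N: "N \<ge> 0" and P: "P \<ge> 0" and r: "r \<ge> 0"
    and H: "\<And>t. t > 0 \<Longrightarrow> 2 * t * N \<le> r * (P + t\<^sup>2 * N)"
  shows "N \<le> r\<^sup>2 * P"
proof (cases "N = 0")
  case True then show ?thesis using r P by simp
next
  case False
  then have Npos: "N > 0" using N by simp
  show ?thesis
  proof (cases "P = 0")
    case True
    define t where "t = 1 / (r + 1)"
    have t: "t > 0" using r by (simp add: t_def)
    have "2 * t * N \<le> r * (t\<^sup>2 * N)" using H[OF t] True by simp
    then have "2 * (t * N) \<le> (r * t) * (t * N)" by (simp add: power2_eq_square algebra_simps)
    then have "2 \<le> r * t" using t Npos by (simp add: mult_le_cancel_right)
    moreover have "r * t < 1" using r by (simp add: t_def)
    ultimately show ?thesis by simp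
  next
    case False
    then have Ppos: "P > 0" using P by simp
    define t where "t = sqrt (P / N)"
    have t: "t > 0" using Ppos Npos by (simp add: t_def)
    have t2: "t\<^sup>2 * N = P" using Ppos Npos by (simp add: t_def)
    have "2 * t * N \<le> r * (2 * P)" using H[OF t] t2 by simp
    then have "t * N \<le> r * P" by simp
    moreover have "0 \<le> t * N" using t Npos by simp
    ultimately have "(t * N)\<^sup>2 \<le> (r * P)\<^sup>2" by (rule power_mono)
    then have "(t\<^sup>2 * N) * N \<le> (r\<^sup>2 * P) * P" by (simp add: power_mult_distrib power2_eq_square algebra_simps)
    then have "P * N \<le> (r\<^sup>2 * P) * P" using t2 by simp
    then have "N * P \<le> (r\<^sup>2 * P) * P" by (simp add: mult.commute)
    then show ?thesis using Ppos by (simp add: mult_le_cancel_right)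
  qed
qed

lemma nrm2_comb: assumes "g \<in> L2" "h \<in> L2"
  shows "complex_of_real (nrm2 (\<lambda>p. g p + a * h p))
     = ip g g + a * ip h g + cnj a * ip g h + a * cnj a * ip h h"
proof -
  have ah: "(\<lambda>p. a * h p) \<in> L2" by (rule L2_scale[OF assms(2)])
  have gh: "(\<lambda>p. g p + a * h p) \<in> L2" by (rule L2_add[OF assms(1) ah])
  have "complex_of_real (nrm2 (\<lambda>p. g p + a * h p)) = ip (\<lambda>p. g p + a * h p) (\<lambda>p. g p + a * h p)"
    by (rule ip_self[OF gh, symmetric])
  also have "\<dots> = ip g (\<lambda>p. g p + a * h p) + a * ip h (\<lambda>p. g p + a * h p)"
    by (simp add: ip_add_left[OF assms(1) ah gh] ip_scale_left)
  also have "\<dots> = ip g g + a * ip h g + cnj a * ip g h + a * cnj a * ip h h"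
    by (simp add: ip_add_right[OF assms(1) ah assms(1)] ip_add_right[OF assms(1) ah assms(2)] ip_scale_right algebra_simps)
  finally show ?thesis .
qed

lemma polar:
  fixes X :: "(real \<times> real \<Rightarrow> complex) \<Rightarrow> (real \<times> real \<Rightarrow> complex)"
  assumes XL2: "\<And>g. g \<in> L2 \<Longrightarrow> X g \<in> L2"
    and Xlin: "\<And>g h a. g \<in> L2 \<Longrightarrow> h \<in> L2 \<Longrightarrow> X (\<lambda>p. g p + a * h p) = (\<lambda>p. X g p + a * X h p)"
    and Xherm: "\<And>g h. g \<in> L2 \<Longrightarrow> h \<in> L2 \<Longrightarrow> ip (X g) h = cnj (ip (X h) g)"
    and Xnr: "\<And>g. g \<in> L2 \<Longrightarrow> \<bar>Re (ip (X g) g)\<bar> \<le> r * nrm2 g"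
    and r: "r \<ge> 0" and g: "g \<in> L2"
  shows "nrm2 (X g) \<le> r\<^sup>2 * nrm2 g"
proof (rule real_polar[OF nrm2_nonneg nrm2_nonneg r])
  fix t :: real assume t: "t > 0"
  define h where "h = X g"
  define hh where "hh = X h"
  have h: "h \<in> L2" unfolding h_def by (rule XL2[OF g])
  have hh: "hh \<in> L2" unfolding hh_def by (rule XL2[OF h])
  define N where "N = nrm2 h"
  define P where "P = nrm2 g"
  have ihh: "ip h h = complex_of_real N" unfolding N_def by (rule ip_self[OF h])
  have igg: "ip g g = complex_of_real P" unfolding P_def by (rule ip_self[OF g])
  have ihhg: "ip hh g = complex_of_real N"
  proof -
    have "ip hh g = cnj (ip (X g) h)" unfolding hh_def by (rule Xherm[OF h g])
    also have "\<dots> = cnj (ip h h)" by (simp add: h_def)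
    also have "\<dots> = complex_of_real N" by (simp add: ihh)
    finally show ?thesis .
  qed
  have Q: "ip (X (\<lambda>p. g p + complex_of_real a * h p)) (\<lambda>p. g p + complex_of_real a * h p)
      = ip h g + 2 * complex_of_real a * complex_of_real N + complex_of_real (a\<^sup>2) * ip hh h" for a
  proof -
    have ah: "(\<lambda>p. complex_of_real a * h p) \<in> L2" by (rule L2_scale[OF h])
    have ahh: "(\<lambda>p. complex_of_real a * hh p) \<in> L2" by (rule L2_scale[OF hh])
    have gh: "(\<lambda>p. g p + complex_of_real a * h p) \<in> L2" by (rule L2_add[OF g ah])
    have "X (\<lambda>p. g p + complex_of_real a * h p) = (\<lambda>p. h p + complex_of_real a * hh p)"
      using Xlin[OF g h, of "complex_of_real a"] by (simp add: hh_def h_def[symmetric])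
    then have "ip (X (\<lambda>p. g p + complex_of_real a * h p)) (\<lambda>p. g p + complex_of_real a * h p)
        = ip h (\<lambda>p. g p + complex_of_real a * h p) + complex_of_real a * ip hh (\<lambda>p. g p + complex_of_real a * h p)"
      by (simp add: ip_add_left[OF h ahh gh] ip_scale_left)
    also have "\<dots> = ip h g + complex_of_real a * ip h h + complex_of_real a * (ip hh g + complex_of_real a * ip hh h)"
      by (simp add: ip_add_right[OF g ah h] ip_add_right[OF g ah hh] ip_scale_right)
    also have "\<dots> = ip h g + 2 * complex_of_real a * complex_of_real N + complex_of_real (a\<^sup>2) * ip hh h"
      unfolding ihh ihhg by (simp add: algebra_simps power2_eq_square)
    finally show ?thesis .
  qed
  have diff: "Re (ip (X (\<lambda>p. g p + complex_of_real t * h p)) (\<lambda>p. g p + complex_of_real t * h p))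
      - Re (ip (X (\<lambda>p. g p + complex_of_real (-t) * h p)) (\<lambda>p. g p + complex_of_real (-t) * h p))
      = 4 * t * N"
    unfolding Q by simp
  have nsum: "nrm2 (\<lambda>p. g p + complex_of_real t * h p) + nrm2 (\<lambda>p. g p + complex_of_real (-t) * h p)
      = 2 * P + 2 * t\<^sup>2 * N"
  proof -
    have "complex_of_real (nrm2 (\<lambda>p. g p + complex_of_real t * h p) + nrm2 (\<lambda>p. g p + complex_of_real (-t) * h p))
        = complex_of_real (2 * P + 2 * t\<^sup>2 * N)"
      unfolding of_real_add nrm2_comb[OF g h] igg ihh by (simp add: algebra_simps power2_eq_square)
    then show ?thesis by (simp only: of_real_eq_iff)
  qed
  have gp: "(\<lambda>p. g p + complex_of_real t * h p) \<in> L2" by (rule L2_add[OF g L2_scale[OF h]])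
  have gm: "(\<lambda>p. g p + complex_of_real (-t) * h p) \<in> L2" by (rule L2_add[OF g L2_scale[OF h]])
  have "4 * t * N \<le> r * nrm2 (\<lambda>p. g p + complex_of_real t * h p) + r * nrm2 (\<lambda>p. g p + complex_of_real (-t) * h p)"
    using diff Xnr[OF gp] Xnr[OF gm] by linarith
  also have "\<dots> = r * (2 * P + 2 * t\<^sup>2 * N)" unfolding nsum[symmetric] by (simp add: algebra_simps)
  finally show "2 * t * nrm2 (X g) \<le> r * (nrm2 g + t\<^sup>2 * nrm2 (X g))"
    unfolding N_def P_def h_def by (simp add: algebra_simps)
qed

lemma shift_norm:
  fixes X :: "(real \<times> real \<Rightarrow> complex) \<Rightarrow> (real \<times> real \<Rightarrow> complex)"
  assumes XL2: "X g \<in> L2"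
    and Xreal: "Im (ip (X g) g) = 0"
    and g: "g \<in> L2"
  shows "nrm2 (\<lambda>p. X g p + \<i> * complex_of_real b * g p) = nrm2 (X g) + b\<^sup>2 * nrm2 g"
proof -
  have r: "ip (X g) g = complex_of_real (Re (ip (X g) g))" using Xreal by (simp add: complex_eq_iff)
  have rc: "cnj (ip (X g) g) = ip (X g) g" by (subst r, simp only: complex_cnj_complex_of_real, subst r, rule refl)
  have "complex_of_real (nrm2 (\<lambda>p. X g p + \<i> * complex_of_real b * g p))
      = ip (X g) (X g) + \<i> * complex_of_real b * ip g (X g) + cnj (\<i> * complex_of_real b) * ip (X g) g
        + \<i> * complex_of_real b * cnj (\<i> * complex_of_real b) * ip g g"
    by (rule nrm2_comb[OF XL2 g])
  also have "\<dots> = complex_of_real (nrm2 (X g) + b\<^sup>2 * nrm2 g)"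
    unfolding ip_cnj[of g "X g"] rc ip_self[OF XL2] ip_self[OF g]
    by (simp add: algebra_simps power2_eq_square)
  finally show ?thesis by (simp only: of_real_eq_iff)
qed


lemma ip_minus_left: assumes "u \<in> L2" "v \<in> L2" "h \<in> L2"
  shows "ip (\<lambda>p. u p - v p) h = ip u h - ip v h"
proof -
  have a: "ip (\<lambda>p. u p + (-1) * v p) h = ip u h + ip (\<lambda>p. (-1) * v p) h"
    by (rule ip_add_left[OF assms(1) L2_scale[OF assms(2)] assms(3)])
  have b: "ip (\<lambda>p. (-1) * v p) h = (-1) * ip v h" by (rule ip_scale_left)
  have c: "(\<lambda>p. u p + (-1) * v p) = (\<lambda>p. u p - v p)" by simp
  show ?thesis using a unfolding b c by simp
qed

context
  fixes eps :: real and k :: "real \<times> real" and c :: "int \<times> int \<Rightarrow> real"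
  assumes eps: "eps \<ge> 0" and ktor: "k \<in> torus"
    and cpos: "\<forall>x. c x \<ge> 0" and csum: "c summable_on UNIV"
begin

abbreviation "TT \<equiv> Top eps k c"
abbreviation "z0 \<equiv> zz eps k"
abbreviation "Mx \<equiv> 8 * eps + infsum c UNIV"

lemma z0_le_Mx: "z0 \<le> Mx"
  using ff_ge[OF eps ktor, of 0] ff_le[OF eps ktor, of 0] csum_nonneg[OF cpos csum] by linarith

lemma ff_in: "z0 \<le> ff eps k p" "ff eps k p \<le> Mx"
  using ff_ge[OF eps ktor, of p] ff_le[OF eps ktor, of p] csum_nonneg[OF cpos csum] by linarith+

definition rr :: "complex \<Rightarrow> real" where
  "rr cc = max \<bar>Re cc - z0\<bar> \<bar>Re cc - Mx\<bar>"

lemma T_contr: assumes g: "g \<in> L2"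
  shows "nrm2 (\<lambda>p. cc * g p - TT g p) \<le> ((rr cc)\<^sup>2 + (Im cc)\<^sup>2) * nrm2 g"
proof -
  define a0 where "a0 = Re cc"
  define X where "X = (\<lambda>g p. complex_of_real a0 * g p - TT g p)"
  have XL2: "X u \<in> L2" if "u \<in> L2" for u
    unfolding X_def by (rule L2_minus[OF L2_scale[OF that] T_L2[OF eps ktor cpos csum that]])
  have Xlin: "X (\<lambda>p. u p + a * v p) = (\<lambda>p. X u p + a * X v p)" if "u \<in> L2" "v \<in> L2" for u v a
    unfolding X_def T_lin[OF eps ktor cpos csum that] by (simp add: algebra_simps)
  have ipX: "ip (X u) v = complex_of_real a0 * ip u v - ip (TT u) v" if "u \<in> L2" "v \<in> L2" for u v
    unfolding X_def by (simp add: ip_minus_left[OF L2_scale[OF that(1)] T_L2[OF eps ktor cpos csum that(1)] that(2)] ip_scale_left)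
  have Xherm: "ip (X u) v = cnj (ip (X v) u)" if "u \<in> L2" "v \<in> L2" for u v
    unfolding ipX[OF that] ipX[OF that(2,1)] T_herm[OF eps ktor cpos csum that] 
    by (simp add: ip_cnj[of u v])
  have Xnr: "\<bar>Re (ip (X u) u)\<bar> \<le> rr cc * nrm2 u" if "u \<in> L2" for u
  proof -
    have P: "0 \<le> nrm2 u" by (rule nrm2_nonneg)
    have e: "Re (ip (X u) u) = a0 * nrm2 u - Re (ip (TT u) u)"
      unfolding ipX[OF that that] ip_self[OF that] by simp
    have l: "z0 * nrm2 u \<le> Re (ip (TT u) u)" and u: "Re (ip (TT u) u) \<le> Mx * nrm2 u"
      using T_range[OF eps ktor cpos csum that] by auto
    have "(a0 - z0) * nrm2 u \<le> rr cc * nrm2 u"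
      by (rule mult_right_mono[OF _ P]) (simp add: rr_def a0_def)
    moreover have "(Mx - a0) * nrm2 u \<le> rr cc * nrm2 u"
      by (rule mult_right_mono[OF _ P]) (simp add: rr_def a0_def)
    ultimately show ?thesis unfolding e using l u by (simp add: algebra_simps abs_le_iff)
  qed
  have rnn: "0 \<le> rr cc" by (simp add: rr_def)
  have p1: "nrm2 (X g) \<le> (rr cc)\<^sup>2 * nrm2 g"
    by (rule polar[OF XL2 Xlin Xherm Xnr rnn g])
  have Xreal: "Im (ip (X g) g) = 0"
    unfolding ipX[OF g g] ip_self[OF g] using T_real[OF eps ktor cpos csum g] by simp
  have e: "(\<lambda>p. cc * g p - TT g p) = (\<lambda>p. X g p + \<i> * complex_of_real (Im cc) * g p)"
  proof
    fix p
    show "cc * g p - TT g p = X g p + \<i> * complex_of_real (Im cc) * g p"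
      unfolding X_def a0_def by (simp add: complex_eq_iff)
  qed
  show ?thesis unfolding e shift_norm[of X g, OF XL2[OF g] Xreal g] using p1 by (simp add: algebra_simps)
qed

lemma exists_cc: assumes "Im w \<noteq> 0 \<or> Re w < z0"
  shows "\<exists>cc. (rr cc)\<^sup>2 + (Im cc)\<^sup>2 < (cmod (cc - w))\<^sup>2"
proof (cases "Re w < z0")
  case True
  define cc where "cc = complex_of_real (Mx + 1)"
  have rr: "rr cc = Mx + 1 - z0" using z0_le_Mx True by (simp add: rr_def cc_def)
  have "(rr cc)\<^sup>2 < (Mx + 1 - Re w)\<^sup>2"
    unfolding rr using True z0_le_Mx by (intro power_strict_mono) auto
  also have "\<dots> \<le> (Mx + 1 - Re w)\<^sup>2 + (Im w)\<^sup>2" by simp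
  also have "\<dots> = (cmod (cc - w))\<^sup>2" unfolding cmod_power2 by (simp add: cc_def)
  finally show ?thesis by (intro exI[of _ cc]) (simp add: cc_def)
next
  case False
  then have b: "Im w \<noteq> 0" using assms by simp
  define D where "D = (Re w - z0)\<^sup>2 + (Re w - Mx)\<^sup>2"
  define cc where "cc = Complex (Re w) (- D / Im w)"
  have rrD: "(rr cc)\<^sup>2 \<le> D"
    by (cases "\<bar>Re w - z0\<bar> \<le> \<bar>Re w - Mx\<bar>") (auto simp: rr_def cc_def D_def max_def)
  have D0: "0 \<le> D" by (simp add: D_def)
  have "(cmod (cc - w))\<^sup>2 = (D / Im w + Im w)\<^sup>2"
    unfolding cmod_power2 by (simp add: cc_def power2_eq_square algebra_simps)
  also have "\<dots> = (D / Im w)\<^sup>2 + 2 * D + (Im w)\<^sup>2"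
  proof -
    have "2 * (D / Im w) * Im w = 2 * D" using b by simp
    then show ?thesis unfolding power2_sum by simp
  qed
  finally have e: "(cmod (cc - w))\<^sup>2 = (D / Im w)\<^sup>2 + 2 * D + (Im w)\<^sup>2" .
  have "(Im cc)\<^sup>2 = (D / Im w)\<^sup>2" by (simp add: cc_def power2_eq_square)
  moreover have "0 < (Im w)\<^sup>2" using b by simp
  ultimately show ?thesis using rrD D0 e by (intro exI[of _ cc]) linarith
qed

end


lemma nrm2_scale: "nrm2 (\<lambda>p. a * u p) = (cmod a)\<^sup>2 * nrm2 u"
  unfolding nrm2_def by (simp add: norm_mult power_mult_distrib)

lemma L2_dom:
  assumes um: "u \<in> borel_measurable borel" and g: "g \<in> L2"
    and a: "a \<ge> 0" and b: "b \<ge> 0"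
    and bnd: "\<And>p. cmod (u p) \<le> a * cmod (g p) + b"
  shows "u \<in> L2" "nrm2 u \<le> 2 * a\<^sup>2 * nrm2 g + 2 * b\<^sup>2"
proof -
  have [measurable]: "g \<in> borel_measurable borel" using L2D[OF g] by simp
  have i2: "integrable nu (\<lambda>p. (cmod (g p))\<^sup>2)" using L2D[OF g] by simp
  have pt: "(cmod (u p))\<^sup>2 \<le> 2 * a\<^sup>2 * (cmod (g p))\<^sup>2 + 2 * b\<^sup>2" for p
  proof -
    have "(cmod (u p))\<^sup>2 \<le> (a * cmod (g p) + b)\<^sup>2"
      by (rule power_mono[OF bnd]) simp
    also have "\<dots> \<le> 2 * a\<^sup>2 * (cmod (g p))\<^sup>2 + 2 * b\<^sup>2"
    proof -
      have "0 \<le> (a * cmod (g p) - b)\<^sup>2" by simp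
      then show ?thesis by (simp add: power2_eq_square algebra_simps)
    qed
    finally show ?thesis .
  qed
  have ib: "integrable nu (\<lambda>p. 2 * a\<^sup>2 * (cmod (g p))\<^sup>2 + 2 * b\<^sup>2)"
    using i2 by (intro Bochner_Integration.integrable_add Bochner_Integration.integrable_mult_right) auto
  have iu: "integrable nu (\<lambda>p. (cmod (u p))\<^sup>2)"
  proof (rule Bochner_Integration.integrable_bound[OF ib])
    show "(\<lambda>p. (cmod (u p))\<^sup>2) \<in> borel_measurable nu" using um by simp
    show "AE x in nu. norm ((cmod (u x))\<^sup>2) \<le> norm (2 * a\<^sup>2 * (cmod (g x))\<^sup>2 + 2 * b\<^sup>2)"
      using pt by (auto intro!: AE_I2 order_trans[OF _ abs_ge_self])
  qed
  show "u \<in> L2" by (rule L2I[OF um iu])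
  have "nrm2 u \<le> (\<integral>p. 2 * a\<^sup>2 * (cmod (g p))\<^sup>2 + 2 * b\<^sup>2 \<partial>nu)"
    unfolding nrm2_def by (rule integral_mono[OF iu ib pt])
  also have "\<dots> = 2 * a\<^sup>2 * nrm2 g + 2 * b\<^sup>2"
    using i2 by (simp add: nrm2_def measure_nu_UNIV)
  finally show "nrm2 u \<le> 2 * a\<^sup>2 * nrm2 g + 2 * b\<^sup>2" .
qed

lemma L2norm_dom:
  assumes "nrm2 u \<le> 2 * a\<^sup>2 * nrm2 g + 2 * b\<^sup>2" "a \<ge> 0" "b \<ge> 0"
  shows "L2norm u \<le> sqrt 2 * (a * L2norm g + b)"
proof -
  have "nrm2 u \<le> 2 * (a * L2norm g + b)\<^sup>2"
  proof -
    have "2 * a\<^sup>2 * nrm2 g + 2 * b\<^sup>2 = 2 * ((a * L2norm g)\<^sup>2 + b\<^sup>2)"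
      by (simp add: L2norm_nrm2 power_mult_distrib nrm2_nonneg)
    also have "\<dots> \<le> 2 * (a * L2norm g + b)\<^sup>2"
      using assms(2,3) by (simp add: power2_sum)
    finally show ?thesis using assms(1) by linarith
  qed
  then have "sqrt (nrm2 u) \<le> sqrt (2 * (a * L2norm g + b)\<^sup>2)" by (rule real_sqrt_le_mono)
  also have "\<dots> = sqrt 2 * (a * L2norm g + b)" using assms(2,3) by (simp add: real_sqrt_mult)
  finally show ?thesis by (simp add: L2norm_nrm2)
qed

lemma KK_zero: "KK c (\<lambda>p. 0) p = 0"
  unfolding KK_def Proj_def coefE_def by simp

lemma Top_zero: "Top eps k c (\<lambda>p. 0) = (\<lambda>p. 0)"
  unfolding Top_def Mult_def by (simp add: KK_zero)

lemma zero_from_pow: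
  fixes X K \<sigma> :: real
  assumes "\<And>N. X \<le> \<sigma> ^ N * K" "0 \<le> \<sigma>" "\<sigma> < 1" "0 \<le> X"
  shows "X = 0"
proof (rule ccontr)
  assume "X \<noteq> 0"
  then have X: "X > 0" using assms(4) by simp
  show False
  proof (cases "K \<le> 0")
    case True
    have "X \<le> \<sigma> ^ 0 * K" by (rule assms(1))
    then show False using True X by simp
  next
    case False
    then have K: "K > 0" by simp
    obtain N where "\<sigma> ^ N < X / K" using real_arch_pow_inv[of "X / K" \<sigma>] X K assms(3) by auto
    then have "\<sigma> ^ N * K < X" using K by (simp add: field_simps)
    then show False using assms(1)[of N] by simp
  qed
qed


context
  fixes eps :: real and k :: "real \<times> real" and c :: "int \<times> int \<Rightarrow> real"
    and w cc :: complex
  assumes eps: "eps \<ge> 0" and ktor: "k \<in> torus"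
    and cpos: "\<forall>x. c x \<ge> 0" and csum: "c summable_on UNIV"
    and hw: "Im w \<noteq> 0 \<or> Re w < zz eps k"
    and hcc: "(rr eps k c cc)\<^sup>2 + (Im cc)\<^sup>2 < (cmod (cc - w))\<^sup>2"
begin

lemmas rr_eq = rr_def[OF eps ktor cpos csum]

definition "dd = cmod (cc - w)"
definition "qq = ((rr eps k c cc)\<^sup>2 + (Im cc)\<^sup>2) / dd\<^sup>2"
definition "ss = sqrt qq"
definition "sg = (1 + ss) / 2"
definition "kap = infsum c UNIV / dd"
definition "MM = kap / (sg - ss)"

lemma dd_pos: "dd > 0"
proof -
  have "0 \<le> (rr eps k c cc)\<^sup>2 + (Im cc)\<^sup>2" by simp
  then have "0 < (cmod (cc - w))\<^sup>2" using hcc by linarith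
  then show ?thesis unfolding dd_def by (simp add: zero_less_power2)
qed

lemma qq_props: "0 \<le> qq" "qq < 1"
  using hcc dd_pos by (auto simp: qq_def dd_def field_simps)

lemma ss_props: "0 \<le> ss" "ss < 1"
  using qq_props by (auto simp: ss_def)

lemma sg_props: "ss \<le> sg" "sg < 1" "0 < sg - ss" "0 \<le> sg"
  using ss_props by (auto simp: sg_def)

lemma kap_nonneg: "0 \<le> kap"
  using csum_nonneg[OF cpos csum] dd_pos by (simp add: kap_def)

lemma MM_nonneg: "0 \<le> MM"
  using kap_nonneg sg_props by (simp add: MM_def)

lemma kap_MM: "kap = MM * (sg - ss)"
  using sg_props by (simp add: MM_def)

definition Qop :: "(real \<times> real \<Rightarrow> complex) \<Rightarrow> (real \<times> real \<Rightarrow> complex)" where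
  "Qop g = (\<lambda>p. inverse (cc - w) * (cc * g p - Top eps k c g p))"

lemma Q_L2: "g \<in> L2 \<Longrightarrow> Qop g \<in> L2"
  unfolding Qop_def by (intro L2_scale L2_minus T_L2[OF eps ktor cpos csum]) auto

lemma Q_norm: assumes g: "g \<in> L2" shows "L2norm (Qop g) \<le> ss * L2norm g"
proof -
  have "nrm2 (Qop g) = (cmod (inverse (cc - w)))\<^sup>2 * nrm2 (\<lambda>p. cc * g p - Top eps k c g p)"
    unfolding Qop_def by (rule nrm2_scale)
  also have "\<dots> \<le> (cmod (inverse (cc - w)))\<^sup>2 * (((rr eps k c cc)\<^sup>2 + (Im cc)\<^sup>2) * nrm2 g)"
    by (rule mult_left_mono[OF T_contr[OF eps ktor cpos csum g]]) simp
  also have "\<dots> = qq * nrm2 g"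
  proof -
    have "cmod (inverse (cc - w)) = inverse dd" by (simp add: norm_inverse dd_def)
    then show ?thesis by (simp add: qq_def divide_inverse power_inverse ac_simps)
  qed
  finally have "sqrt (nrm2 (Qop g)) \<le> sqrt (qq * nrm2 g)" by (rule real_sqrt_le_mono)
  then show ?thesis by (simp add: L2norm_nrm2 ss_def real_sqrt_mult)
qed

lemma Top_pt: "Top eps k c g p = complex_of_real (ff eps k p) * g p + KK c g p"
  unfolding Top_def Mult_def ..

lemma cc_ff: "cmod (cc - complex_of_real (ff eps k p)) \<le> ss * dd"
proof -
  have l: "zz eps k \<le> ff eps k p" and u: "ff eps k p \<le> 8 * eps + infsum c UNIV"
    using ff_in[OF eps ktor cpos csum] by auto
  have a1: "Re cc - ff eps k p \<le> \<bar>Re cc - zz eps k\<bar>" using l by linarith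
  have a2: "ff eps k p - Re cc \<le> \<bar>Re cc - (8 * eps + infsum c UNIV)\<bar>" using u by linarith
  have b1: "Re cc - ff eps k p \<le> rr eps k c cc" by (rule order_trans[OF a1]) (simp add: rr_eq)
  have b2: "ff eps k p - Re cc \<le> rr eps k c cc" by (rule order_trans[OF a2]) (simp add: rr_eq)
  have "\<bar>Re cc - ff eps k p\<bar> \<le> rr eps k c cc"
    using b1 b2 by (simp add: abs_le_iff)
  then have "(Re cc - ff eps k p)\<^sup>2 \<le> (rr eps k c cc)\<^sup>2"
    by (metis abs_le_square_iff abs_of_nonneg le_max_iff_disj abs_ge_zero rr_eq)
  then have "(cmod (cc - complex_of_real (ff eps k p)))\<^sup>2 \<le> (rr eps k c cc)\<^sup>2 + (Im cc)\<^sup>2"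
    unfolding cmod_power2 by simp
  also have "\<dots> = qq * dd\<^sup>2" using dd_pos by (simp add: qq_def)
  also have "\<dots> = (ss * dd)\<^sup>2"
  proof -
    have "ss\<^sup>2 = qq" unfolding ss_def using qq_props(1) by simp
    then show ?thesis by (simp add: power_mult_distrib)
  qed
  finally have "(cmod (cc - complex_of_real (ff eps k p)))\<^sup>2 \<le> (ss * dd)\<^sup>2" .
  then show ?thesis by (rule power2_le_imp_le) (use ss_props dd_pos in simp)
qed

lemma Q_pt: assumes g: "g \<in> L2"
  shows "cmod (Qop g p) \<le> ss * cmod (g p) + kap * L2norm g"
proof -
  have e: "Qop g p = inverse (cc - w) * ((cc - complex_of_real (ff eps k p)) * g p - KK c g p)"
    unfolding Qop_def Top_pt by (simp add: algebra_simps)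
  have "cmod ((cc - complex_of_real (ff eps k p)) * g p - KK c g p)
      \<le> cmod ((cc - complex_of_real (ff eps k p)) * g p) + cmod (KK c g p)"
    by (rule norm_triangle_ineq4)
  also have "\<dots> \<le> ss * dd * cmod (g p) + L2norm g * infsum c UNIV"
  proof (rule add_mono)
    show "cmod ((cc - complex_of_real (ff eps k p)) * g p) \<le> ss * dd * cmod (g p)"
      unfolding norm_mult by (rule mult_right_mono[OF cc_ff]) simp
    show "cmod (KK c g p) \<le> L2norm g * infsum c UNIV" by (rule KK_suminf(3)[OF cpos csum g])
  qed
  finally have "cmod (Qop g p) \<le> inverse dd * (ss * dd * cmod (g p) + L2norm g * infsum c UNIV)"
    unfolding e norm_mult norm_inverse dd_def[symmetric] using dd_pos by (intro mult_left_mono) auto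
  also have "\<dots> = ss * cmod (g p) + kap * L2norm g"
    using dd_pos by (simp add: kap_def field_simps)
  finally show ?thesis .
qed

abbreviation "phi g n \<equiv> (Qop ^^ n) g"

lemma phi_L2: "g \<in> L2 \<Longrightarrow> phi g n \<in> L2"
  by (induction n) (auto intro: Q_L2)

lemma phi_norm: assumes g: "g \<in> L2" shows "L2norm (phi g n) \<le> ss ^ n * L2norm g"
proof (induction n)
  case 0 then show ?case by simp
next
  case (Suc n)
  have "L2norm (phi g (Suc n)) \<le> ss * L2norm (phi g n)"
    using Q_norm[OF phi_L2[OF g, of n]] by simp
  also have "\<dots> \<le> ss * (ss ^ n * L2norm g)"
    using Suc ss_props by (intro mult_left_mono) auto
  finally show ?case by simp
qed

lemma phi_pt: assumes g: "g \<in> L2"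
  shows "cmod (phi g n p) \<le> ss ^ n * cmod (g p) + MM * sg ^ n * L2norm g"
proof (induction n)
  case 0 then show ?case using MM_nonneg by simp
next
  case (Suc n)
  have "cmod (phi g (Suc n) p) \<le> ss * cmod (phi g n p) + kap * L2norm (phi g n)"
    using Q_pt[OF phi_L2[OF g, of n]] by simp
  also have "\<dots> \<le> ss * (ss ^ n * cmod (g p) + MM * sg ^ n * L2norm g) + kap * (ss ^ n * L2norm g)"
    using Suc ss_props kap_nonneg phi_norm[OF g, of n] by (intro add_mono mult_left_mono) auto
  also have "\<dots> \<le> ss * (ss ^ n * cmod (g p) + MM * sg ^ n * L2norm g) + kap * (sg ^ n * L2norm g)"
    using kap_nonneg sg_props ss_props
    by (intro add_mono mult_left_mono mult_right_mono power_mono) auto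
  also have "\<dots> = ss ^ Suc n * cmod (g p) + MM * sg ^ Suc n * L2norm g"
    unfolding kap_MM by (simp add: algebra_simps)
  finally show ?case .
qed

definition Rres :: "(real \<times> real \<Rightarrow> complex) \<Rightarrow> (real \<times> real \<Rightarrow> complex)" where
  "Rres g = (\<lambda>p. inverse (cc - w) * (\<Sum>n. phi g n p))"

definition HH :: "(real \<times> real \<Rightarrow> complex) \<Rightarrow> nat \<Rightarrow> (real \<times> real \<Rightarrow> complex)" where
  "HH g N = (\<lambda>p. inverse (cc - w) * (\<Sum>n<N. phi g n p))"

definition DD :: "(real \<times> real \<Rightarrow> complex) \<Rightarrow> nat \<Rightarrow> (real \<times> real \<Rightarrow> complex)" where
  "DD g N = (\<lambda>p. inverse (cc - w) * (\<Sum>n. phi g (n + N) p))"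

definition "alpha = 1 / (dd * (1 - ss))"
definition "beta = MM / (dd * (1 - sg))"
definition "C1 = sqrt 2 * (alpha + beta)"

lemma alpha_nonneg: "0 \<le> alpha" using dd_pos ss_props by (simp add: alpha_def)
lemma beta_nonneg: "0 \<le> beta" using dd_pos sg_props MM_nonneg by (simp add: beta_def)

lemma geo_ss: "summable (\<lambda>n. ss ^ n)" using ss_props by (intro summable_geometric) simp
lemma geo_sg: "summable (\<lambda>n. sg ^ n)" using sg_props by (intro summable_geometric) simp

lemma phi_bound_summable: "summable (\<lambda>n. (A * ss ^ N) * ss ^ n + (B * sg ^ N) * sg ^ n)"
  by (intro summable_add summable_mult geo_ss geo_sg)

lemma phi_bound_sum:
  "(\<Sum>n. (A * ss ^ N) * ss ^ n + (B * sg ^ N) * sg ^ n) = A * ss ^ N / (1 - ss) + B * sg ^ N / (1 - sg)"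
proof -
  have "(\<Sum>n. (A * ss ^ N) * ss ^ n + (B * sg ^ N) * sg ^ n)
      = (\<Sum>n. (A * ss ^ N) * ss ^ n) + (\<Sum>n. (B * sg ^ N) * sg ^ n)"
    by (rule suminf_add[OF summable_mult[OF geo_ss] summable_mult[OF geo_sg], symmetric])
  also have "\<dots> = A * ss ^ N / (1 - ss) + B * sg ^ N / (1 - sg)"
    using ss_props sg_props by (simp add: suminf_mult[OF geo_ss] suminf_mult[OF geo_sg] suminf_geometric)
  finally show ?thesis .
qed

lemma phi_pt2: assumes g: "g \<in> L2"
  shows "cmod (phi g (n + N) p) \<le> (cmod (g p) * ss ^ N) * ss ^ n + (MM * L2norm g * sg ^ N) * sg ^ n"
  using phi_pt[OF g, of "n + N" p] by (simp add: power_add algebra_simps)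

lemma phi_summable: assumes g: "g \<in> L2"
  shows "summable (\<lambda>n. cmod (phi g (n + N) p))"
  by (rule summable_comparison_test[OF _ phi_bound_summable[of "cmod (g p)" N "MM * L2norm g"]])
     (use phi_pt2[OF g, of _ N p] in auto)

lemma tail_bound: assumes g: "g \<in> L2"
  shows "cmod (\<Sum>n. phi g (n + N) p) \<le> sg ^ N * (cmod (g p) / (1 - ss) + MM * L2norm g / (1 - sg))"
proof -
  have "cmod (\<Sum>n. phi g (n + N) p) \<le> (\<Sum>n. cmod (phi g (n + N) p))"
    by (rule summable_norm[OF phi_summable[OF g]])
  also have "\<dots> \<le> (\<Sum>n. (cmod (g p) * ss ^ N) * ss ^ n + (MM * L2norm g * sg ^ N) * sg ^ n)"
    by (rule suminf_le[OF phi_pt2[OF g, of _ N p] phi_summable[OF g] phi_bound_summable])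
  also have "\<dots> = cmod (g p) * ss ^ N / (1 - ss) + MM * L2norm g * sg ^ N / (1 - sg)"
    by (rule phi_bound_sum)
  also have "\<dots> \<le> cmod (g p) * sg ^ N / (1 - ss) + MM * L2norm g * sg ^ N / (1 - sg)"
    using ss_props sg_props MM_nonneg
    by (intro add_mono divide_right_mono mult_left_mono power_mono) auto
  also have "\<dots> = sg ^ N * (cmod (g p) / (1 - ss) + MM * L2norm g / (1 - sg))"
    by (simp add: algebra_simps)
  finally show ?thesis .
qed

lemma DD_bound: assumes g: "g \<in> L2"
  shows "cmod (DD g N p) \<le> sg ^ N * (alpha * cmod (g p) + beta * L2norm g)"
proof -
  have "cmod (DD g N p) = inverse dd * cmod (\<Sum>n. phi g (n + N) p)"
    by (simp add: DD_def norm_mult norm_inverse dd_def)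
  also have "\<dots> \<le> inverse dd * (sg ^ N * (cmod (g p) / (1 - ss) + MM * L2norm g / (1 - sg)))"
    using dd_pos by (intro mult_left_mono tail_bound[OF g]) auto
  also have "\<dots> = sg ^ N * (alpha * cmod (g p) + beta * L2norm g)"
    by (simp add: alpha_def beta_def divide_inverse inverse_mult_distrib distrib_left mult_ac)
  finally show ?thesis .
qed

lemma phi_meas: assumes g: "g \<in> L2" shows "phi g n \<in> borel_measurable borel"
  using L2D(1)[OF phi_L2[OF g]] .

lemma DD_meas: assumes g: "g \<in> L2" shows "DD g N \<in> borel_measurable borel"
proof -
  have [measurable]: "\<And>n. phi g n \<in> borel_measurable borel" by (rule phi_meas[OF g])
  show ?thesis unfolding DD_def by measurable
qed

lemma DD_L2: assumes g: "g \<in> L2" shows "DD g N \<in> L2" "L2norm (DD g N) \<le> sg ^ N * C1 * L2norm g"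
proof -
  have a: "0 \<le> sg ^ N * alpha" using sg_props alpha_nonneg by simp
  have b: "0 \<le> sg ^ N * beta * L2norm g" using sg_props beta_nonneg by simp
  have bnd: "cmod (DD g N p) \<le> (sg ^ N * alpha) * cmod (g p) + sg ^ N * beta * L2norm g" for p
    using DD_bound[OF g, of N p] by (simp add: algebra_simps)
  note d = L2_dom[OF DD_meas[OF g] g a b bnd]
  show "DD g N \<in> L2" by (rule d(1))
  have "L2norm (DD g N) \<le> sqrt 2 * (sg ^ N * alpha * L2norm g + sg ^ N * beta * L2norm g)"
    by (rule L2norm_dom[OF d(2) a b])
  also have "\<dots> = sg ^ N * C1 * L2norm g" by (simp add: C1_def algebra_simps)
  finally show "L2norm (DD g N) \<le> sg ^ N * C1 * L2norm g" .
qed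

lemma Rres_DD: "Rres g = DD g 0"
  by (simp add: Rres_def DD_def)

lemma Rres_L2: assumes g: "g \<in> L2" shows "Rres g \<in> L2" "L2norm (Rres g) \<le> C1 * L2norm g"
  using DD_L2[OF g, of 0] by (simp_all add: Rres_DD)

lemma HH_L2: assumes g: "g \<in> L2" shows "HH g N \<in> L2"
  unfolding HH_def by (intro L2_scale L2_sum phi_L2[OF g]) auto

lemma Rres_split: assumes g: "g \<in> L2" shows "Rres g = (\<lambda>p. HH g N p + 1 * DD g N p)"
proof
  fix p
  have s: "summable (\<lambda>n. phi g n p)"
    using summable_norm_cancel[OF phi_summable[OF g, of 0 p]] by simp
  show "Rres g p = HH g N p + 1 * DD g N p"
    unfolding Rres_def HH_def DD_def suminf_split_initial_segment[OF s, of N]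
    by (simp add: algebra_simps)
qed

lemma T_phi: assumes g: "g \<in> L2"
  shows "Top eps k c (phi g n) p - w * phi g n p = (cc - w) * (phi g n p - phi g (Suc n) p)"
proof -
  have ne: "cc - w \<noteq> 0" using dd_pos by (auto simp: dd_def)
  have "phi g (Suc n) p = inverse (cc - w) * (cc * phi g n p - Top eps k c (phi g n) p)"
    by (simp add: Qop_def)
  then have "(cc - w) * phi g (Suc n) p = cc * phi g n p - Top eps k c (phi g n) p"
    using ne by simp
  then show ?thesis by (simp add: algebra_simps)
qed

lemma HH_eq: assumes g: "g \<in> L2"
  shows "Top eps k c (HH g N) p - w * HH g N p = g p - phi g N p"
proof (induction N arbitrary: p)
  case 0
  have "HH g 0 = (\<lambda>p. 0)" by (simp add: HH_def)
  then show ?case by (simp add: Top_zero)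
next
  case (Suc N)
  have ne: "cc - w \<noteq> 0" using dd_pos by (auto simp: dd_def)
  have e: "HH g (Suc N) = (\<lambda>p. HH g N p + inverse (cc - w) * phi g N p)"
    by (simp add: HH_def algebra_simps)
  have "Top eps k c (HH g (Suc N)) p - w * HH g (Suc N) p
      = (Top eps k c (HH g N) p - w * HH g N p) + inverse (cc - w) * (Top eps k c (phi g N) p - w * phi g N p)"
    unfolding e T_lin[OF eps ktor cpos csum HH_L2[OF g] phi_L2[OF g]] by (simp add: algebra_simps)
  also have "\<dots> = (g p - phi g N p) + inverse (cc - w) * ((cc - w) * (phi g N p - phi g (Suc N) p))"
    unfolding Suc T_phi[OF g] ..
  also have "\<dots> = g p - phi g (Suc N) p"
    using ne by (simp add: field_simps)
  finally show ?case .
qed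

lemma R_right: assumes g: "g \<in> L2"
  shows "Top eps k c (Rres g) p - w * Rres g p = g p"
proof -
  define G where "G = L2norm g"
  define K where "K = cmod (g p) + MM * G + (8 * eps + cmod w) * (alpha * cmod (g p) + beta * G)
      + infsum c UNIV * C1 * G"
  have "cmod (Top eps k c (Rres g) p - w * Rres g p - g p) \<le> sg ^ N * K" for N
  proof -
    have e: "Top eps k c (Rres g) p - w * Rres g p - g p
        = (Top eps k c (DD g N) p - w * DD g N p) - phi g N p"
    proof -
      have "Top eps k c (Rres g) p = Top eps k c (HH g N) p + 1 * Top eps k c (DD g N) p"
        unfolding Rres_split[OF g, of N] T_lin[OF eps ktor cpos csum HH_L2[OF g] DD_L2(1)[OF g]] ..
      moreover have "Rres g p = HH g N p + 1 * DD g N p" unfolding Rres_split[OF g, of N] ..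
      ultimately show ?thesis using HH_eq[OF g, of N p] by (simp add: algebra_simps)
    qed
    have t1: "cmod (Top eps k c (DD g N) p) \<le> 8 * eps * cmod (DD g N p) + L2norm (DD g N) * infsum c UNIV"
    proof -
      have "cmod (Top eps k c (DD g N) p) \<le> cmod (complex_of_real (ff eps k p) * DD g N p) + cmod (KK c (DD g N) p)"
        unfolding Top_pt by (rule norm_triangle_ineq)
      also have "\<dots> \<le> 8 * eps * cmod (DD g N p) + L2norm (DD g N) * infsum c UNIV"
      proof (rule add_mono)
        show "cmod (complex_of_real (ff eps k p) * DD g N p) \<le> 8 * eps * cmod (DD g N p)"
          unfolding norm_mult by (rule mult_right_mono) (use ff_abs[OF eps ktor] in auto)
        show "cmod (KK c (DD g N) p) \<le> L2norm (DD g N) * infsum c UNIV"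
          by (rule KK_suminf(3)[OF cpos csum DD_L2(1)[OF g]])
      qed
      finally show ?thesis .
    qed
    have DDb: "cmod (DD g N p) \<le> sg ^ N * (alpha * cmod (g p) + beta * G)"
      using DD_bound[OF g] by (simp add: G_def)
    have DDn: "L2norm (DD g N) * infsum c UNIV \<le> sg ^ N * C1 * G * infsum c UNIV"
      using DD_L2(2)[OF g, of N] csum_nonneg[OF cpos csum] by (intro mult_right_mono) (auto simp: G_def)
    have phib: "cmod (phi g N p) \<le> sg ^ N * (cmod (g p) + MM * G)"
    proof -
      have "cmod (phi g N p) \<le> ss ^ N * cmod (g p) + MM * sg ^ N * G"
        using phi_pt[OF g] by (simp add: G_def)
      also have "\<dots> \<le> sg ^ N * cmod (g p) + MM * sg ^ N * G"
        using ss_props sg_props MM_nonneg by (intro add_mono mult_right_mono mult_left_mono power_mono) (auto simp: G_def)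
      finally show ?thesis by (simp add: algebra_simps)
    qed
    have "cmod (Top eps k c (Rres g) p - w * Rres g p - g p)
        \<le> cmod (Top eps k c (DD g N) p) + cmod w * cmod (DD g N p) + cmod (phi g N p)"
    proof -
      have n1: "cmod ((Top eps k c (DD g N) p - w * DD g N p) - phi g N p)
          \<le> cmod (Top eps k c (DD g N) p - w * DD g N p) + cmod (phi g N p)"
        by (rule norm_triangle_ineq4)
      have n2: "cmod (Top eps k c (DD g N) p - w * DD g N p) \<le> cmod (Top eps k c (DD g N) p) + cmod w * cmod (DD g N p)"
        using norm_triangle_ineq4[of "Top eps k c (DD g N) p" "w * DD g N p"] by (simp add: norm_mult)
      show ?thesis unfolding e using n1 n2 by linarith
    qed
    also have "\<dots> \<le> (8 * eps * cmod (DD g N p) + sg ^ N * C1 * G * infsum c UNIV)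
        + cmod w * cmod (DD g N p) + sg ^ N * (cmod (g p) + MM * G)"
      using t1 DDn phib by linarith
    also have "\<dots> = (8 * eps + cmod w) * cmod (DD g N p) + sg ^ N * C1 * G * infsum c UNIV
        + sg ^ N * (cmod (g p) + MM * G)" by (simp add: algebra_simps)
    also have "\<dots> \<le> (8 * eps + cmod w) * (sg ^ N * (alpha * cmod (g p) + beta * G)) + sg ^ N * C1 * G * infsum c UNIV
        + sg ^ N * (cmod (g p) + MM * G)"
      by (rule add_mono[OF add_mono[OF mult_left_mono[OF DDb] order_refl] order_refl]) (use eps in simp)
    also have "\<dots> = sg ^ N * K" by (simp add: K_def algebra_simps)
    finally show ?thesis .
  qed
  then have "cmod (Top eps k c (Rres g) p - w * Rres g p - g p) = 0"
    by (rule zero_from_pow) (use sg_props in auto)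
  then show ?thesis by simp
qed

lemma R_left: assumes g: "g \<in> L2"
  shows "AE p in nu. Rres (\<lambda>q. Top eps k c g q - w * g q) p = g p"
proof -
  define g' where "g' = (\<lambda>q. Top eps k c g q - w * g q)"
  have g': "g' \<in> L2" unfolding g'_def by (rule L2_minus[OF T_L2[OF eps ktor cpos csum g] L2_scale[OF g]])
  define h where "h = Rres g'"
  have h: "h \<in> L2" unfolding h_def by (rule Rres_L2(1)[OF g'])
  define u where "u = (\<lambda>p. h p + (-1) * g p)"
  have u: "u \<in> L2" unfolding u_def by (rule L2_add[OF h L2_scale[OF g]])
  have Tu: "Top eps k c u = (\<lambda>p. w * u p)"
  proof
    fix p
    have a: "Top eps k c u p = Top eps k c h p + (-1) * Top eps k c g p"
      unfolding u_def T_lin[OF eps ktor cpos csum h g] ..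
    have b: "Top eps k c h p - w * h p = Top eps k c g p - w * g p"
      using R_right[OF g', of p] unfolding h_def[symmetric] by (simp add: g'_def)
    have c: "u p = h p - g p" by (simp add: u_def)
    show "Top eps k c u p = w * u p" unfolding a c using b by (simp add: algebra_simps)
  qed
  have ipu: "ip (Top eps k c u) u = w * complex_of_real (nrm2 u)"
    unfolding Tu ip_scale_left ip_self[OF u] ..
  have n0: "nrm2 u = 0"
  proof (rule ccontr)
    assume "nrm2 u \<noteq> 0"
    then have np: "nrm2 u > 0" using nrm2_nonneg[of u] by simp
    have "Im w * nrm2 u = 0" using T_real[OF eps ktor cpos csum u] unfolding ipu by simp
    then have i0: "Im w = 0" using np by simp
    have "zz eps k * nrm2 u \<le> Re w * nrm2 u" using T_range(1)[OF eps ktor cpos csum u] unfolding ipu by simp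
    then have "zz eps k \<le> Re w" using np by simp
    then show False using hw i0 by simp
  qed
  have [measurable]: "u \<in> borel_measurable borel" using L2D[OF u] by simp
  have "AE p in nu. (cmod (u p))\<^sup>2 = 0"
    using n0 unfolding nrm2_def by (subst (asm) integral_nonneg_eq_0_iff_AE) (use L2D(2)[OF u] in auto)
  then show ?thesis
    by (rule AE_mp) (auto intro!: AE_I2 simp: u_def h_def g'_def)
qed

lemma resolvent: "L2_resolvent (Top eps k c) w"
  unfolding L2_resolvent_def
proof (intro exI[of _ Rres] conjI ballI)
  show "\<And>g. g \<in> L2 \<Longrightarrow> Rres g \<in> L2" by (rule Rres_L2(1))
  show "\<exists>C. \<forall>g\<in>L2. L2norm (Rres g) \<le> C * L2norm g" using Rres_L2(2) by blast
  show "\<And>g. g \<in> L2 \<Longrightarrow> AE p in nu. Top eps k c (Rres g) p - w * Rres g p = g p"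
    using R_right by auto
  show "\<And>g. g \<in> L2 \<Longrightarrow> AE p in nu. Rres (\<lambda>q. Top eps k c g q - w * g q) p = g p"
    by (rule R_left)
qed

end


lemma box_lborel: "emeasure lborel ({a1..b1::real} \<times> {a2..b2::real}) = ennreal ((b1 - a1) * (b2 - a2))"
  if "a1 \<le> b1" "a2 \<le> b2"
proof -
  have "emeasure lborel ({a1..b1::real} \<times> {a2..b2::real}) = emeasure (lborel \<Otimes>\<^sub>M lborel) ({a1..b1::real} \<times> {a2..b2::real})"
    by (simp add: lborel_prod)
  also have "\<dots> = emeasure lborel {a1..b1} * emeasure lborel {a2..b2}"
    by (rule lborel.emeasure_pair_measure_Times) auto
  also have "\<dots> = ennreal ((b1 - a1) * (b2 - a2))"
    using that by (simp add: ennreal_mult')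
  finally show ?thesis .
qed

lemma box_borel[measurable]: "({a1..b1::real} \<times> {a2..b2::real}) \<in> sets borel"
  by (rule borel_Times) auto

lemma box_nu: assumes "a1 \<le> b1" "a2 \<le> b2" and sub: "{a1..b1::real} \<times> {a2..b2::real} \<subseteq> torus"
  shows "measure nu ({a1..b1} \<times> {a2..b2}) = (b1 - a1) * (b2 - a2) / (4 * pi\<^sup>2)"
proof -
  define S where "S = {a1..b1::real} \<times> {a2..b2::real}"
  have [measurable]: "S \<in> sets borel" unfolding S_def by simp
  have "emeasure nu S = (\<integral>\<^sup>+ x. ennreal (indicator torus x / (4 * pi\<^sup>2)) * indicator S x \<partial>lborel)"
    unfolding nu_def by (rule emeasure_density) auto
  also have "\<dots> = (\<integral>\<^sup>+ x. ennreal (1 / (4 * pi\<^sup>2)) * indicator S x \<partial>lborel)"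
    using sub by (intro nn_integral_cong) (auto simp: indicator_def S_def)
  also have "\<dots> = ennreal (1 / (4 * pi\<^sup>2)) * emeasure lborel S"
    by (rule nn_integral_cmult_indicator) simp
  also have "\<dots> = ennreal ((b1 - a1) * (b2 - a2) / (4 * pi\<^sup>2))"
    unfolding S_def box_lborel[OF assms(1,2)] using assms(1,2) by (simp add: ennreal_mult'[symmetric])
  finally show ?thesis unfolding S_def[symmetric] measure_def using assms(1,2) by simp
qed

lemma weyl:
  fixes eps :: real and k :: "real \<times> real" and c :: "int \<times> int \<Rightarrow> real"
  assumes eps: "eps \<ge> 0" and ktor: "k \<in> torus"
    and cpos: "\<forall>x. c x \<ge> 0" and csum: "c summable_on UNIV"
  shows "\<not> L2_resolvent (Top eps k c) (complex_of_real (zz eps k))"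
proof
  assume "L2_resolvent (Top eps k c) (complex_of_real (zz eps k))"
  then obtain R C where R1: "\<forall>g\<in>L2. R g \<in> L2" and R2: "\<forall>g\<in>L2. L2norm (R g) \<le> C * L2norm g"
    and R4: "\<forall>g\<in>L2. AE p in nu. R (\<lambda>q. Top eps k c g q - complex_of_real (zz eps k) * g q) p = g p"
    unfolding L2_resolvent_def by blast
  define z0 where "z0 = zz eps k"
  define ka where "ka = infsum c UNIV"
  have ka: "0 \<le> ka" unfolding ka_def by (rule csum_nonneg[OF cpos csum])
  define p0 where "p0 = (- fst k / 2, - snd k / 2)"
  have fp0: "ff eps k p0 = z0" unfolding p0_def z0_def by (rule ff_p0[OF eps ktor])
  define eta where "eta = 1 / (2 * \<bar>C\<bar> + 1)"
  have eta: "eta > 0" by (simp add: eta_def add_pos_nonneg)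
  obtain del where del: "del > 0" and hdel: "\<And>p. dist p p0 < del \<Longrightarrow> dist (ff eps k p) (ff eps k p0) < eta"
    using ff_cont[OF eps ktor] eta unfolding continuous_on_iff by (metis UNIV_I)
  define r where "r = min (min (del / 3) (pi / 4)) (min 1 (1 / (4 * C\<^sup>2 * ka\<^sup>2 + 1)))"
  have q0: "0 \<le> 4 * C\<^sup>2 * ka\<^sup>2" by simp
  have q1: "0 < 4 * C\<^sup>2 * ka\<^sup>2 + 1" using q0 by linarith
  have r0: "r > 0" using del q1 by (simp add: r_def)
  have r1: "r \<le> del / 3" "r \<le> pi / 4" "r \<le> 1" "r \<le> 1 / (4 * C\<^sup>2 * ka\<^sup>2 + 1)"
    by (simp_all add: r_def)
  define S where "S = {fst p0 - r..fst p0 + r} \<times> {snd p0 - r..snd p0 + r}"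
  have Sb[measurable]: "S \<in> sets borel" unfolding S_def by simp
  have Ssub: "S \<subseteq> torus"
  proof
    fix p assume "p \<in> S"
    moreover have "fst k \<in> {-pi..<pi}" "snd k \<in> {-pi..<pi}" using ktor by (auto simp: torus_def)
    ultimately show "p \<in> torus" using r1(2) r0 by (auto simp: S_def p0_def torus_def mem_Times_iff)
  qed
  define m where "m = measure nu S"
  have m: "m = r\<^sup>2 / pi\<^sup>2"
  proof -
    have "m = (fst p0 + r - (fst p0 - r)) * (snd p0 + r - (snd p0 - r)) / (4 * pi\<^sup>2)"
      unfolding m_def S_def by (rule box_nu) (use r0 Ssub in \<open>auto simp: S_def\<close>)
    then show ?thesis by (simp add: power2_eq_square field_simps)
  qed
  have mpos: "m > 0" unfolding m using r0 by simp
  have mle: "m \<le> 1 / (4 * C\<^sup>2 * ka\<^sup>2 + 1)"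
  proof -
    have "pi\<^sup>2 \<ge> 1" using pi_gt3 by (simp add: power2_eq_square) (smt (verit) mult_less_cancel_right2 pi_gt_zero)
    then have "m \<le> r\<^sup>2" unfolding m using r0 by (simp add: divide_le_eq)
    also have "\<dots> \<le> r" using r0 r1(3) by (simp add: power2_eq_square mult_le_cancel_left1)
    also have "\<dots> \<le> 1 / (4 * C\<^sup>2 * ka\<^sup>2 + 1)" by (rule r1(4))
    finally show ?thesis .
  qed
  define g where "g = (\<lambda>p. complex_of_real (indicator S p))"
  have [measurable]: "g \<in> borel_measurable borel" unfolding g_def by measurable
  have gL2: "g \<in> L2" by (rule L2_bounded[where B=1]) (auto simp: g_def indicator_def)
  have ng: "nrm2 g = m"
  proof -
    have "(\<lambda>p. (cmod (g p))\<^sup>2) = indicator S" by (auto simp: g_def indicator_def)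
    then show ?thesis unfolding nrm2_def m_def by simp
  qed
  have ig: "(\<integral>p. cmod (g p) \<partial>nu) = m"
  proof -
    have "(\<lambda>p. cmod (g p)) = indicator S" by (auto simp: g_def indicator_def)
    then show ?thesis unfolding m_def by simp
  qed
  define h where "h = (\<lambda>q. Top eps k c g q - complex_of_real (zz eps k) * g q)"
  have hL2: "h \<in> L2" unfolding h_def by (rule L2_minus[OF T_L2[OF eps ktor cpos csum gL2] L2_scale[OF gL2]])
  have hb: "cmod (h p) \<le> eta * cmod (g p) + ka * m" for p
  proof -
    have e: "h p = (complex_of_real (ff eps k p - z0)) * g p + KK c g p"
      unfolding h_def Top_def Mult_def z0_def by (simp add: algebra_simps)
    have a: "cmod (complex_of_real (ff eps k p - z0) * g p) \<le> eta * cmod (g p)"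
    proof (cases "p \<in> S")
      case True
      have "dist p p0 < del"
      proof -
        have d1: "\<bar>fst p - fst p0\<bar> \<le> r" and d2: "\<bar>snd p - snd p0\<bar> \<le> r"
          using True by (auto simp: S_def mem_Times_iff abs_le_iff)
        have "dist p p0 = sqrt ((fst p - fst p0)\<^sup>2 + (snd p - snd p0)\<^sup>2)"
          using dist_Pair_Pair[of "fst p" "snd p" "fst p0" "snd p0"] by (simp add: dist_real_def)
        also have "\<dots> \<le> sqrt (r\<^sup>2 + r\<^sup>2)"
        proof -
          have s1: "(fst p - fst p0)\<^sup>2 \<le> r\<^sup>2" using d1 r0 by (metis abs_le_square_iff abs_of_pos)
          have s2: "(snd p - snd p0)\<^sup>2 \<le> r\<^sup>2" using d2 r0 by (metis abs_le_square_iff abs_of_pos)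
          show ?thesis by (intro real_sqrt_le_mono add_mono s1 s2)
        qed
        also have "\<dots> = sqrt 2 * r"
        proof -
          have "sqrt (r\<^sup>2 + r\<^sup>2) = sqrt (2 * r\<^sup>2)" by simp
          also have "\<dots> = sqrt 2 * sqrt (r\<^sup>2)" by (rule real_sqrt_mult)
          also have "\<dots> = sqrt 2 * r" using r0 by simp
          finally show ?thesis .
        qed
        also have "\<dots> < 3 * r" using r0 sqrt2_less_2 by simp
        also have "\<dots> \<le> del" using r1(1) by simp
        finally show ?thesis .
      qed
      then have "\<bar>ff eps k p - z0\<bar> < eta" using hdel fp0 by (simp add: dist_real_def)
      then have "cmod (complex_of_real (ff eps k p - z0)) \<le> eta" by (simp only: norm_of_real)
      then show ?thesis unfolding norm_mult by (rule mult_right_mono) simp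
    next
      case False
      then show ?thesis by (simp add: g_def)
    qed
    have b: "cmod (KK c g p) \<le> ka * m"
      using KK_bound1[OF cpos csum L2_integrable[OF gL2], of p] ig by (simp add: ka_def mult.commute)
    show ?thesis unfolding e using a b norm_triangle_ineq[of "complex_of_real (ff eps k p - z0) * g p" "KK c g p"]
      by linarith
  qed
  have hm[measurable]: "h \<in> borel_measurable borel" using L2D[OF hL2] by simp
  have nh: "nrm2 h \<le> 2 * eta\<^sup>2 * m + 2 * (ka * m)\<^sup>2"
    using L2_dom(2)[OF hm gL2 _ _ hb] eta ka mpos ng by simp
  have RhL2: "R h \<in> L2" using R1 hL2 by blast
  have AEe: "AE p in nu. R h p = g p" using R4 gL2 unfolding h_def by blast
  have nRh: "nrm2 (R h) = m"
  proof -
    have "nrm2 (R h) = nrm2 g" unfolding nrm2_def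
      by (rule integral_cong_AE) (use L2D[OF RhL2] AEe in \<open>auto elim: AE_mp\<close>)
    then show ?thesis using ng by simp
  qed
  have "sqrt m \<le> C * sqrt (nrm2 h)" using R2 hL2 nRh by (auto simp: L2norm_nrm2)
  moreover have "sqrt m > 0" using mpos by simp
  ultimately have Cpos: "C > 0" using nrm2_nonneg[of h]
    by (smt (verit, ccfv_threshold) mult_nonpos_nonneg real_sqrt_ge_zero)
  have "(sqrt m)\<^sup>2 \<le> (C * sqrt (nrm2 h))\<^sup>2"
    using \<open>sqrt m \<le> C * sqrt (nrm2 h)\<close> mpos by (intro power_mono) auto
  then have "m \<le> C\<^sup>2 * nrm2 h" using mpos nrm2_nonneg[of h] by (simp add: power_mult_distrib)
  also have "\<dots> \<le> C\<^sup>2 * (2 * eta\<^sup>2 * m + 2 * (ka * m)\<^sup>2)" by (rule mult_left_mono[OF nh]) simp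
  finally have "m * 1 \<le> m * (2 * C\<^sup>2 * eta\<^sup>2 + 2 * C\<^sup>2 * ka\<^sup>2 * m)"
    by (simp add: power2_eq_square algebra_simps)
  then have key: "1 \<le> 2 * C\<^sup>2 * eta\<^sup>2 + 2 * C\<^sup>2 * ka\<^sup>2 * m"
    using mpos by (simp only: mult_le_cancel_left_pos)
  have t1: "2 * C\<^sup>2 * eta\<^sup>2 < 1 / 2"
  proof -
    have "2 * C\<^sup>2 * eta\<^sup>2 = 2 * C\<^sup>2 / (2 * C + 1)\<^sup>2" using Cpos by (simp add: eta_def power_divide)
    also have "\<dots> < 1 / 2"
    proof -
      have d: "0 < (2 * C + 1)\<^sup>2" using Cpos by simp
      have "4 * C\<^sup>2 < (2 * C + 1)\<^sup>2" using Cpos by (simp add: power2_eq_square algebra_simps)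
      then have "2 * C\<^sup>2 < 1 / 2 * (2 * C + 1)\<^sup>2" by simp
      then show ?thesis using d by (simp only: divide_less_eq) simp
    qed
    finally show ?thesis .
  qed
  have t2: "2 * C\<^sup>2 * ka\<^sup>2 * m < 1 / 2"
  proof -
    have "2 * C\<^sup>2 * ka\<^sup>2 * m \<le> 2 * C\<^sup>2 * ka\<^sup>2 * (1 / (4 * C\<^sup>2 * ka\<^sup>2 + 1))"
      by (rule mult_left_mono[OF mle]) simp
    also have "\<dots> < 1 / 2" using q1 by (simp add: field_simps)
    finally show ?thesis .
  qed
  show False using key t1 t2 by linarith
qed


lemma resolvent_mono:
  assumes eq: "\<And>g. g \<in> L2 \<Longrightarrow> A g = B g" and r: "L2_resolvent A z"
  shows "L2_resolvent B z"
proof -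
  obtain R where R1: "\<forall>g\<in>L2. R g \<in> L2" and R2: "\<exists>C. \<forall>g\<in>L2. L2norm (R g) \<le> C * L2norm g"
    and R3: "\<forall>g\<in>L2. AE p in nu. A (R g) p - z * R g p = g p"
    and R4: "\<forall>g\<in>L2. AE p in nu. R (\<lambda>q. A g q - z * g q) p = g p"
    using r unfolding L2_resolvent_def by blast
  show ?thesis unfolding L2_resolvent_def
  proof (intro exI[of _ R] conjI ballI)
    show "\<And>g. g \<in> L2 \<Longrightarrow> R g \<in> L2" using R1 by blast
    show "\<exists>C. \<forall>g\<in>L2. L2norm (R g) \<le> C * L2norm g" by (rule R2)
    fix g assume g: "g \<in> L2"
    have a: "AE p in nu. A (R g) p - z * R g p = g p" using R3 g by blast
    then show "AE p in nu. B (R g) p - z * R g p = g p"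
      by (simp add: eq[OF bspec[OF R1 g]])
    have b: "AE p in nu. R (\<lambda>q. A g q - z * g q) p = g p" using R4 g by blast
    then show "AE p in nu. R (\<lambda>q. B g q - z * g q) p = g p"
      by (simp add: eq[OF g])
  qed
qed

lemma spectrum_eq:
  assumes eq: "\<And>g. g \<in> L2 \<Longrightarrow> A g = B g"
  shows "L2_spectrum A = L2_spectrum B"
proof -
  have "L2_resolvent A z \<longleftrightarrow> L2_resolvent B z" for z
    using resolvent_mono[of A B z] resolvent_mono[of B A z] eq by metis
  then show ?thesis unfolding L2_spectrum_def by simp
qed

lemma main_T:
  fixes eps :: real and k :: "real \<times> real" and c :: "int \<times> int \<Rightarrow> real"
  assumes eps: "eps \<ge> 0" and ktor: "k \<in> torus"
    and cpos: "\<forall>x. c x \<ge> 0" and csum: "c summable_on UNIV"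
  shows "is_min_spectrum (L2_spectrum (Top eps k c)) (zz eps k)"
  unfolding is_min_spectrum_def L2_spectrum_def
proof (intro conjI ballI)
  show "complex_of_real (zz eps k) \<in> {z. \<not> L2_resolvent (Top eps k c) z}"
    using weyl[OF eps ktor cpos csum] by simp
  fix w assume w: "w \<in> {z. \<not> L2_resolvent (Top eps k c) z}"
  have "Im w = 0 \<and> zz eps k \<le> Re w"
  proof (rule ccontr)
    assume "\<not> (Im w = 0 \<and> zz eps k \<le> Re w)"
    then have hw: "Im w \<noteq> 0 \<or> Re w < zz eps k" by auto
    obtain cc where hcc: "(rr eps k c cc)\<^sup>2 + (Im cc)\<^sup>2 < (cmod (cc - w))\<^sup>2"
      using exists_cc[OF eps ktor cpos csum hw] by blast
    have "L2_resolvent (Top eps k c) w" by (rule resolvent[OF eps ktor cpos csum hw hcc])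
    then show False using w by simp
  qed
  then show "w \<in> \<real>" "zz eps k \<le> Re w" by (auto simp: complex_is_Real_iff)
qed

lemma delta_has_sum: "((\<lambda>x. if x = a then v else 0) has_sum v) UNIV"
proof -
  have "((\<lambda>x. if x = a then v else 0) has_sum v) {a}"
    using has_sum_finite[of "{a}" "\<lambda>x. if x = a then v else 0"] by simp
  then show ?thesis
    by (subst has_sum_cong_neutral[of "{a}" UNIV "\<lambda>x. if x = a then v else 0" "\<lambda>x. if x = a then v else 0"]) auto
qed

theorem corollary4p3:
  fixes eps U :: real and u :: "int \<times> int \<Rightarrow> real" and k :: "real \<times> real"
  assumes "eps \<ge> 0" and "U \<ge> 0"
    and "\<forall>x. u x \<ge> 0"
    and "u summable_on UNIV"
    and "\<forall>a b. u (- b, a) = u (a, b)"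
    and "k \<in> torus"
  shows "is_min_spectrum (L2_spectrum (Aop eps u U k)) (zz eps k)
       \<and> is_min_spectrum (L2_spectrum (Bop eps u k)) (zz eps k)
       \<and> is_min_spectrum (L2_spectrum (Mult (ff eps k))) (zz eps k)"
proof (intro conjI)
  note eps = assms(1) and U = assms(2) and upos = assms(3) and usum = assms(4) and ktor = assms(6)
  have upos': "0 \<le> u x" for x using upos by blast
  define cA where "cA = (\<lambda>x. u x + (if x = (0, 0) then U else 0))"
  have cApos: "\<forall>x. cA x \<ge> 0" using upos' U by (simp add: cA_def)
  have dsum: "(\<lambda>x::int \<times> int. if x = (0, 0) then U else 0) summable_on UNIV"
    using delta_has_sum[of "(0::int, 0::int)" U] by (auto simp: summable_on_def)
  have cAsum: "cA summable_on UNIV" unfolding cA_def by (rule summable_on_add[OF usum dsum])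
  have Aeq: "Aop eps u U k g = Top eps k cA g" if g: "g \<in> L2" for g
  proof
    fix p
    have s1: "(\<lambda>x. complex_of_real (u x) * Proj x g p) summable_on UNIV"
    proof (rule Infinite_Sum.abs_summable_summable, rule Infinite_Sum.abs_summable_on_comparison_test)
      show "(\<lambda>x. norm (L2norm g * u x)) summable_on UNIV"
        using summable_on_cmult_right[OF usum, of "L2norm g"] upos' by simp
      show "norm (complex_of_real (u x) * Proj x g p) \<le> norm (L2norm g * u x)" for x
        using KK_term_bound[OF upos usum g, of x p] upos' by simp
    qed
    have s2: "(\<lambda>x. if x = (0, 0) then complex_of_real U * Proj (0, 0) g p else 0) summable_on UNIV"
      unfolding summable_on_def by (rule exI, rule delta_has_sum)
    have i2: "(\<Sum>\<^sub>\<infinity>x. if x = (0, 0) then complex_of_real U * Proj (0, 0) g p else 0) = complex_of_real U * Proj (0, 0) g p"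
      by (rule infsumI[OF delta_has_sum])
    have "(\<Sum>\<^sub>\<infinity>x. complex_of_real (cA x) * Proj x g p)
        = (\<Sum>\<^sub>\<infinity>x. complex_of_real (u x) * Proj x g p + (if x = (0, 0) then complex_of_real U * Proj (0, 0) g p else 0))"
      by (intro infsum_cong) (auto simp: cA_def algebra_simps)
    also have "\<dots> = (\<Sum>\<^sub>\<infinity>x. complex_of_real (u x) * Proj x g p) + complex_of_real U * Proj (0, 0) g p"
      unfolding infsum_add[OF s1 s2] i2 ..
    finally show "Aop eps u U k g p = Top eps k cA g p"
      unfolding Aop_def Bop_def Top_def KK_def by simp
  qed
  show "is_min_spectrum (L2_spectrum (Aop eps u U k)) (zz eps k)"
    using main_T[OF eps ktor cApos cAsum] spectrum_eq[of "Aop eps u U k" "Top eps k cA", OF Aeq] by simp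
  have Beq: "Bop eps u k = Top eps k u" by (intro ext) (simp add: Bop_def Top_def KK_def)
  show "is_min_spectrum (L2_spectrum (Bop eps u k)) (zz eps k)"
    unfolding Beq by (rule main_T[OF eps ktor upos usum])
  have Meq: "Mult (ff eps k) = Top eps k (\<lambda>_. 0)" by (intro ext) (simp add: Top_def KK_def)
  show "is_min_spectrum (L2_spectrum (Mult (ff eps k))) (zz eps k)"
    unfolding Meq by (rule main_T[OF eps ktor]) auto
qed

end
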